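(* Let $(X,\rho,\mu)$ be a $K$-doubling metric measure space, $(M,d)$ a complete metric space and $\mathcal D$ an $X$-distribution for $M$. If $\mathcal D$ is differentiably complete, then for every nonempty $A\subseteq X$ every function $f\colon A\to M$ is a.e. $\mathcal D$-differentiable on $A_f$. Conversely, if every function $f\colon X\to M$ is a.e. $\mathcal D$-differentiable on $A_f$, then $\mathcal D$ is differentiably complete.
   Context: A $K$-doubling metric measure space ($K>0$) is a triple $(X,\rho,\mu)$ where $(X,\rho)$ is a complete separable metric space and $\mu$ is a Borel-regular outer measure on $X$ with $0<\mu(B_{2r}(x))\le K\mu(B_r(x))<+\infty$ for all $x\in X$, $r>0$. A set $E\ni x$ is a $\mu$-neighborhood of $x$ if there is a Borel set $B\subseteq E$ with $\lim_{r\to0^+}\mu(B_r(x)\setminus B)/\mu(B_r(x))=0$; $x$ is a $\mu$-accumulation point of $A$ if $A\cap U\setminus\{x\}\ne\emptyset$ for every $\mu$-neighborhood $U$ of $x$; $\mu\text{-}\lim$ and $\mu\text{-}\limsup$ are the limit and upper limit along $\mu$-neighborhoods (e.g. $\mu\text{-}\limsup_{y\in A,y\to x}g(y)=\inf_U\sup_{y\in U\cap A\setminus\{x\}}g(y)$ over $\mu$-neighborhoods $U$ of $x$). For $x\in X$, $P\in M$, $\mathcal C_{x,P}$ is the set of classes $[F]$ of Lipschitz maps $F\colon B\to M$ defined on a metric neighborhood $B$ of $x$ with $F(x)=P$, modulo $F\sim G\iff\lim_{y\to x}d(F(y),G(y))/\rho(y,x)=0$. An $X$-distribution for $M$ is any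 subset $\mathcal D\subseteq\bigsqcup_{(x,P)}\mathcal C_{x,P}$, with $\mathcal D_{x,P}=\mathcal D\cap\mathcal C_{x,P}$. For $f\colon A\to M$ and an accumulation point $x\in A$ of $A$, $f$ is $\mathcal D$-differentiable at $x$ if some $[F]\in\mathcal D_{x,f(x)}$ satisfies $\lim_{y\in A,y\to x}d(f(y),F(y))/\rho(y,x)=0$; for a $\mu$-accumulation point $x\in A$, $f$ is approximately $\mathcal D$-differentiable at $x$ if some $[F]\in\mathcal D_{x,f(x)}$ satisfies $\mu\text{-}\lim_{y\in A,y\to x}d(f(y),F(y))/\rho(y,x)=0$. $A_f$ is the set of accumulation points $x\in A$ of $A$ with $\limsup_{y\in A,y\to x}d(f(y),f(x))/\rho(y,x)<+\infty$, and $A_f^\mu$ the set of $\mu$-accumulation points $x\in A$ of $A$ with $\mu\text{-}\limsup_{y\in A,y\to x}d(f(y),f(x))/\rho(y,x)<+\infty$. "$f$ is a.e. $\mathcal D$-differentiable on $A_f$" means: for every $\mu$-measurable $B\subseteq A_f$, $f$ is $\mathcal D$-differentiable at $\mu$-a.e. point of $B$ (similarly for the approximate notion on $A_f^\mu$). $\mathcal D$ is differentiably complete if for every nonempty closed $C\subseteq X$ and every Lipschitz $g\colon C\to M$, $g$ is a.e. approximately $\mathcal D$-differentiable on $A_g^\mu$. *)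

theory Defs
  imports "HOL-Analysis.Analysis"
begin

section \<open>Outer measures on the metric space X (= UNIV of a polish type)\<close>

definition outer_measure :: "('a set \<Rightarrow> ennreal) \<Rightarrow> bool" where
  "outer_measure mu \<longleftrightarrow> mu {} = 0 \<and> (\<forall>A B. A \<subseteq> B \<longrightarrow> mu A \<le> mu B) \<and>
     (\<forall>As :: nat \<Rightarrow> 'a set. mu (\<Union>(range As)) \<le> (\<Sum>i. mu (As i)))"

definition mu_measurable :: "('a set \<Rightarrow> ennreal) \<Rightarrow> 'a set \<Rightarrow> bool" where
  "mu_measurable mu E \<longleftrightarrow> (\<forall>T. mu T = mu (T \<inter> E) + mu (T - E))"

definition borel_regular_outer_measure :: "('a::topological_space set \<Rightarrow> ennreal) \<Rightarrow> bool" where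
  "borel_regular_outer_measure mu \<longleftrightarrow> outer_measure mu \<and>
     (\<forall>B \<in> sets borel. mu_measurable mu B) \<and>
     (\<forall>A. \<exists>B \<in> sets borel. A \<subseteq> B \<and> mu B = mu A)"

definition doubling_mms :: "real \<Rightarrow> ('a::polish_space set \<Rightarrow> ennreal) \<Rightarrow> bool" where
  "doubling_mms K mu \<longleftrightarrow> K > 0 \<and> borel_regular_outer_measure mu \<and>
     (\<forall>x r. r > 0 \<longrightarrow> 0 < mu (ball x (2*r)) \<and> mu (ball x (2*r)) \<le> ennreal K * mu (ball x r)
                       \<and> mu (ball x r) < \<infinity>)"

definition mu_nbhd :: "('a::metric_space set \<Rightarrow> ennreal) \<Rightarrow> 'a \<Rightarrow> 'a set \<Rightarrow> bool" where
  "mu_nbhd mu x E \<longleftrightarrow> x \<in> E \<and> (\<exists>B \<in> sets borel. B \<subseteq> E \<and>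
     ((\<lambda>r. enn2real (mu (ball x r - B)) / enn2real (mu (ball x r))) \<longlongrightarrow> 0) (at_right 0))"

definition mu_accumulation :: "('a::metric_space set \<Rightarrow> ennreal) \<Rightarrow> 'a \<Rightarrow> 'a set \<Rightarrow> bool" where
  "mu_accumulation mu x A \<longleftrightarrow> (\<forall>U. mu_nbhd mu x U \<longrightarrow> A \<inter> U - {x} \<noteq> {})"

definition mu_tendsto :: "('a::metric_space set \<Rightarrow> ennreal) \<Rightarrow> 'a \<Rightarrow> 'a set \<Rightarrow> ('a \<Rightarrow> real) \<Rightarrow> real \<Rightarrow> bool" where
  "mu_tendsto mu x A g L \<longleftrightarrow>
     (\<forall>e>0. \<exists>U. mu_nbhd mu x U \<and> (\<forall>y \<in> U \<inter> A - {x}. dist (g y) L < e))"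

definition mu_limsup :: "('a::metric_space set \<Rightarrow> ennreal) \<Rightarrow> 'a \<Rightarrow> 'a set \<Rightarrow> ('a \<Rightarrow> real) \<Rightarrow> ereal" where
  "mu_limsup mu x A g = (INF U \<in> {U. mu_nbhd mu x U}. SUP y \<in> U \<inter> A - {x}. ereal (g y))"

text \<open>A representative of an element of C_{x,P}: a pair (B, F) with B a metric
  neighbourhood of x and F : B \<rightarrow> M Lipschitz with F x = P (values of F outside B are irrelevant).\<close>
definition lip_rep :: "'a::metric_space \<Rightarrow> 'b::metric_space \<Rightarrow> ('a set \<times> ('a \<Rightarrow> 'b)) \<Rightarrow> bool" where
  "lip_rep x P BF \<longleftrightarrow> (case BF of (B, F) \<Rightarrow>
     (\<exists>U. open U \<and> x \<in> U \<and> U \<subseteq> B) \<and> (\<exists>L. L-lipschitz_on B F) \<and> F x = P)"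

definition germ_eq :: "'a::metric_space \<Rightarrow> ('a set \<times> ('a \<Rightarrow> 'b::metric_space)) \<Rightarrow> ('a set \<times> ('a \<Rightarrow> 'b)) \<Rightarrow> bool" where
  "germ_eq x BF CG \<longleftrightarrow> (case BF of (B, F) \<Rightarrow> case CG of (C, G) \<Rightarrow>
     ((\<lambda>y. dist (F y) (G y) / dist y x) \<longlongrightarrow> 0) (at x within (B \<inter> C)))"

definition germ_classes :: "'a::metric_space \<Rightarrow> 'b::metric_space \<Rightarrow> ('a set \<times> ('a \<Rightarrow> 'b)) set set" where
  "germ_classes x P = {c. \<exists>r. lip_rep x P r \<and> c = {s. lip_rep x P s \<and> germ_eq x r s}}"

text \<open>An X-distribution: a subset of the disjoint union of the C_{x,P}, tagged by (x,P).\<close>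
definition X_distribution :: "('a::metric_space \<times> 'b::metric_space \<times> ('a set \<times> ('a \<Rightarrow> 'b)) set) set \<Rightarrow> bool" where
  "X_distribution D \<longleftrightarrow> (\<forall>(x, P, c) \<in> D. c \<in> germ_classes x P)"

definition D_differentiable_at ::
  "('a::metric_space \<times> 'b::metric_space \<times> ('a set \<times> ('a \<Rightarrow> 'b)) set) set \<Rightarrow> 'a set \<Rightarrow> ('a \<Rightarrow> 'b) \<Rightarrow> 'a \<Rightarrow> bool" where
  "D_differentiable_at D A f x \<longleftrightarrow> x \<in> A \<and> x islimpt A \<and>
     (\<exists>c. (x, f x, c) \<in> D \<and> (\<exists>(B, F) \<in> c.
        ((\<lambda>y. dist (f y) (F y) / dist y x) \<longlongrightarrow> 0) (at x within A)))"

definition approx_D_differentiable_at ::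
  "('a::metric_space set \<Rightarrow> ennreal) \<Rightarrow> ('a \<times> 'b::metric_space \<times> ('a set \<times> ('a \<Rightarrow> 'b)) set) set \<Rightarrow> 'a set \<Rightarrow> ('a \<Rightarrow> 'b) \<Rightarrow> 'a \<Rightarrow> bool" where
  "approx_D_differentiable_at mu D A f x \<longleftrightarrow> x \<in> A \<and> mu_accumulation mu x A \<and>
     (\<exists>c. (x, f x, c) \<in> D \<and> (\<exists>(B, F) \<in> c.
        mu_tendsto mu x A (\<lambda>y. dist (f y) (F y) / dist y x) 0))"

definition lip_points :: "'a::metric_space set \<Rightarrow> ('a \<Rightarrow> 'b::metric_space) \<Rightarrow> 'a set" where
  "lip_points A f = {x \<in> A. x islimpt A \<and>
     Limsup (at x within A) (\<lambda>y. ereal (dist (f y) (f x) / dist y x)) < \<infinity>}"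

definition approx_lip_points :: "('a::metric_space set \<Rightarrow> ennreal) \<Rightarrow> 'a set \<Rightarrow> ('a \<Rightarrow> 'b::metric_space) \<Rightarrow> 'a set" where
  "approx_lip_points mu A f = {x \<in> A. mu_accumulation mu x A \<and>
     mu_limsup mu x A (\<lambda>y. dist (f y) (f x) / dist y x) < \<infinity>}"

definition ae_D_differentiable ::
  "('a::metric_space set \<Rightarrow> ennreal) \<Rightarrow> ('a \<times> 'b::metric_space \<times> ('a set \<times> ('a \<Rightarrow> 'b)) set) set \<Rightarrow> 'a set \<Rightarrow> ('a \<Rightarrow> 'b) \<Rightarrow> bool" where
  "ae_D_differentiable mu D A f \<longleftrightarrow> (\<forall>B. mu_measurable mu B \<and> B \<subseteq> lip_points A f \<longrightarrow>
     mu {x \<in> B. \<not> D_differentiable_at D A f x} = 0)"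

definition ae_approx_D_differentiable ::
  "('a::metric_space set \<Rightarrow> ennreal) \<Rightarrow> ('a \<times> 'b::metric_space \<times> ('a set \<times> ('a \<Rightarrow> 'b)) set) set \<Rightarrow> 'a set \<Rightarrow> ('a \<Rightarrow> 'b) \<Rightarrow> bool" where
  "ae_approx_D_differentiable mu D A f \<longleftrightarrow> (\<forall>B. mu_measurable mu B \<and> B \<subseteq> approx_lip_points mu A f \<longrightarrow>
     mu {x \<in> B. \<not> approx_D_differentiable_at mu D A f x} = 0)"

definition differentiably_complete ::
  "('a::metric_space set \<Rightarrow> ennreal) \<Rightarrow> ('a \<times> 'b::metric_space \<times> ('a set \<times> ('a \<Rightarrow> 'b)) set) set \<Rightarrow> bool" where
  "differentiably_complete mu D \<longleftrightarrow> (\<forall>C g. closed C \<and> C \<noteq> {} \<and> (\<exists>L. L-lipschitz_on C g) \<longrightarrow>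
     ae_approx_D_differentiable mu D C g)"

end

theory Submission
  imports Defs
begin


locale dm =
  fixes K :: real and mu :: "'a::polish_space set \<Rightarrow> ennreal"
  assumes dbl: "doubling_mms K mu"
begin

lemma Kpos: "K > 0" using dbl by (simp add: doubling_mms_def)

lemma om: "outer_measure mu"
  using dbl by (simp add: doubling_mms_def borel_regular_outer_measure_def)

lemma mono: "A \<subseteq> B \<Longrightarrow> mu A \<le> mu B"
  using om by (simp add: outer_measure_def)

lemma mu_empty[simp]: "mu {} = 0"
  using om by (simp add: outer_measure_def)

lemma csub: "mu (\<Union>i. As i) \<le> (\<Sum>i. mu (As i))"
  using om unfolding outer_measure_def by blast

lemma sub2: "mu (A \<union> B) \<le> mu A + mu B"
proof -
  define As where "As = (\<lambda>i::nat. if i = 0 then A else if i = 1 then B else {})"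
  have "(\<Union>i. As i) = A \<union> B" unfolding As_def by (auto split: if_splits)
  moreover have "(\<Sum>i. mu (As i)) = mu A + mu B"
  proof -
    have "(\<Sum>i. mu (As i)) = (\<Sum>i\<in>{0,1}. mu (As i))"
      by (rule suminf_finite) (auto simp: As_def)
    then show ?thesis by (simp add: As_def)
  qed
  ultimately show ?thesis using csub[of As] by simp
qed

lemma meas: "S \<in> sets borel \<Longrightarrow> mu T = mu (T \<inter> S) + mu (T - S)"
  using dbl unfolding doubling_mms_def borel_regular_outer_measure_def mu_measurable_def by blast

lemma hull: "\<exists>B \<in> sets borel. A \<subseteq> B \<and> mu B = mu A"
  using dbl unfolding doubling_mms_def borel_regular_outer_measure_def by blast

lemma ball_fin: "mu (ball x r) < \<infinity>"
proof (cases "r > 0")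
  case True then show ?thesis using dbl unfolding doubling_mms_def by blast
next
  case False then have "ball x r = {}" by auto
  then have "mu (ball x r) = 0" by (metis mu_empty)
  then show ?thesis by simp
qed

lemma ball_pos: "r > 0 \<Longrightarrow> 0 < mu (ball x r)"
proof -
  assume r: "r > 0"
  then have "0 < r/2" by simp
  then have "0 < mu (ball x (2*(r/2)))" using dbl unfolding doubling_mms_def by blast
  then show ?thesis by simp
qed

lemma dbl1: "r > 0 \<Longrightarrow> mu (ball x (2*r)) \<le> ennreal K * mu (ball x r)"
  using dbl unfolding doubling_mms_def by blast

lemma dbl_iter: "r > 0 \<Longrightarrow> mu (ball x (2^m * r)) \<le> ennreal (K^m) * mu (ball x r)"
proof (induction m)
  case 0 then show ?case by simp
next
  case (Suc m)
  have "mu (ball x (2^Suc m * r)) = mu (ball x (2 * (2^m * r)))" by (simp add: mult.assoc)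
  also have "\<dots> \<le> ennreal K * mu (ball x (2^m * r))" using dbl1 Suc by simp
  also have "\<dots> \<le> ennreal K * (ennreal (K^m) * mu (ball x r))"
    using Suc by (intro mult_left_mono) auto
  also have "\<dots> = ennreal (K^Suc m) * mu (ball x r)"
  proof -
    have "ennreal (K^Suc m) = ennreal K * ennreal (K^m)" using Kpos by (simp add: ennreal_mult)
    then show ?thesis by (simp add: mult.assoc)
  qed
  finally show ?case .
qed

lemma null_measurable: "mu N = 0 \<Longrightarrow> mu_measurable mu N"
  unfolding mu_measurable_def
proof
  fix T assume N: "mu N = 0"
  have "mu (T \<inter> N) = 0" using mono[of "T \<inter> N" N] N by simp
  moreover have "mu T \<le> mu (T \<inter> N) + mu (T - N)"
    using sub2[of "T \<inter> N" "T - N"] by (metis Int_Diff_Un)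
  moreover have "mu (T - N) \<le> mu T" by (rule mono) auto
  ultimately show "mu T = mu (T \<inter> N) + mu (T - N)" by (simp add: antisym)
qed

lemma null_union: "(\<And>i::nat. mu (N i) = 0) \<Longrightarrow> mu (\<Union>i. N i) = 0"
  using csub[of N] by simp

lemma null_subset: "mu N = 0 \<Longrightarrow> A \<subseteq> N \<Longrightarrow> mu A = 0"
  using mono[of A N] by simp

lemma add_borel: "A \<in> sets borel \<Longrightarrow> A \<inter> B = {} \<Longrightarrow> mu (A \<union> B) = mu A + mu B"
  using meas[of A "A \<union> B"] by (simp add: Int_absorb2 Un_Diff Diff_triv inf_commute)

end


context dm begin

lemma ca_borel: "countably_additive (sets borel) mu"
proof -
  interpret sa: sigma_algebra "UNIV::'a set" "Pow UNIV" by (rule sigma_algebra_Pow)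
  have oms: "outer_measure_space (Pow UNIV) mu"
    unfolding outer_measure_space_def positive_def increasing_def countably_subadditive_def
    using mono csub by auto
  have ms: "measure_space UNIV (lambda_system UNIV (Pow UNIV) mu) mu"
    by (rule sa.caratheodory_lemma[OF oms])
  have sub: "sets borel \<subseteq> lambda_system UNIV (Pow UNIV) mu"
  proof
    fix S :: "'a set" assume S: "S \<in> sets borel"
    show "S \<in> lambda_system UNIV (Pow UNIV) mu"
      unfolding lambda_system_def
    proof (safe)
      fix T :: "'a set"
      have "mu T = mu (T \<inter> S) + mu (T - S)" using meas[OF S] .
      moreover have "T \<inter> S = S \<inter> T" "T - S = (UNIV - S) \<inter> T" by auto
      ultimately show "mu (S \<inter> T) + mu ((UNIV - S) \<inter> T) = mu T" by simp
    qed auto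
  qed
  show ?thesis
    using ms sub unfolding measure_space_def countably_additive_def by blast
qed

lemma outer_reg:
  assumes S: "S \<in> sets borel" and SR: "S \<subseteq> ball z R" and e: "e > 0"
  shows "\<exists>V. open V \<and> S \<subseteq> V \<and> mu (V - S) < ennreal e"
proof -
  define \<nu> where "\<nu> = (\<lambda>T. mu (T \<inter> ball z R))"
  have sab: "sigma_algebra UNIV (sets borel)"
    by (metis sets.sigma_algebra_axioms space_borel)
  have pos: "positive (sets borel) \<nu>" by (simp add: positive_def \<nu>_def)
  have ca: "countably_additive (sets borel) \<nu>"
    unfolding countably_additive_def
  proof (intro allI impI)
    fix A :: "nat \<Rightarrow> 'a set"
    assume A: "range A \<subseteq> sets borel" "disjoint_family A" "\<Union> (range A) \<in> sets borel"
    have r: "range (\<lambda>i. A i \<inter> ball z R) \<subseteq> sets borel" using A(1) by auto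
    have d: "disjoint_family (\<lambda>i. A i \<inter> ball z R)" using A(2) by (auto simp: disjoint_family_on_def)
    have u: "(\<Union>i. A i \<inter> ball z R) \<in> sets borel" using A(3) by auto
    have "(\<Sum>i. mu ((\<lambda>i. A i \<inter> ball z R) i)) = mu (\<Union>i. A i \<inter> ball z R)"
      using ca_borel[unfolded countably_additive_def, rule_format, OF r d u] .
    then show "(\<Sum>i. \<nu> (A i)) = \<nu> (\<Union> (range A))"
      by (simp add: \<nu>_def)
  qed
  define M where "M = measure_of UNIV (sets borel) \<nu>"
  have setsM: "sets M = sets borel"
    unfolding M_def by (simp add: sets_measure_of sigma_algebra.sigma_sets_eq[OF sab])
  have spM: "space M = UNIV" unfolding M_def by simp
  have emM: "\<And>T. T \<in> sets borel \<Longrightarrow> emeasure M T = \<nu> T"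
    unfolding M_def by (rule emeasure_measure_of_sigma[OF sab pos ca])
  have fin: "emeasure M (space M) \<noteq> \<infinity>"
    using emM[of UNIV] ball_fin[of z R] by (simp add: spM \<nu>_def)
  have "emeasure M S = (INF U \<in> {U. S \<subseteq> U \<and> open U}. emeasure M U)"
    by (rule outer_regular[OF setsM fin S])
  have muS: "mu S < \<infinity>" using mono[OF SR] ball_fin[of z R] by auto
  have nuS: "\<nu> S = mu S" using SR by (simp add: \<nu>_def Int_absorb2)
  have "(INF U \<in> {U. S \<subseteq> U \<and> open U}. emeasure M U) < mu S + ennreal e"
  proof -
    have "mu S + 0 < mu S + ennreal e" using muS e by (subst ennreal_add_left_cancel_less) auto
    then show ?thesis using \<open>emeasure M S = _\<close> emM[OF S] nuS by simp
  qed
  then obtain U where U: "S \<subseteq> U" "open U" "emeasure M U < mu S + ennreal e"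
    by (auto simp: INF_less_iff)
  define V where "V = U \<inter> ball z R"
  have "open V" using U by (simp add: V_def open_Int)
  moreover have "S \<subseteq> V" using U SR by (auto simp: V_def)
  moreover have "mu (V - S) < ennreal e"
  proof -
    have "emeasure M U = mu V" using emM[of U] U(2) by (simp add: \<nu>_def V_def)
    also have "mu V = mu (V \<inter> S) + mu (V - S)" by (rule meas[OF S])
    also have "V \<inter> S = S" using \<open>S \<subseteq> V\<close> by auto
    finally have "mu S + mu (V - S) < mu S + ennreal e" using U by simp
    then show ?thesis using ennreal_add_left_cancel_less by blast
  qed
  ultimately show ?thesis by blast
qed

end


lemma cb_sub: "dist a b + r < s \<Longrightarrow> cball a r \<subseteq> ball b s"
proof
  fix y assume h: "dist a b + r < s" "y \<in> cball a r"
  have "dist b y \<le> dist b a + dist a y" by (rule dist_triangle)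
  then show "y \<in> ball b s" using h by (simp add: dist_commute)
qed

lemma vitali_metric:
  fixes a :: "'a \<Rightarrow> 'b::{metric_space,second_countable_topology}"
  assumes "\<And>i. i \<in> K \<Longrightarrow> 0 < r i \<and> r i \<le> B"
  obtains C where "countable C" "C \<subseteq> K"
     "pairwise (\<lambda>i j. disjnt (cball (a i) (r i)) (cball (a j) (r j))) C"
     "\<And>i. i \<in> K \<Longrightarrow> \<exists>j. j \<in> C \<and>
                        \<not> disjnt (cball (a i) (r i)) (cball (a j) (r j)) \<and>
                        cball (a i) (r i) \<subseteq> ball (a j) (5 * r j)"
proof (cases "K = {}")
  case True
  with that show ?thesis
    by auto
next
  case False
  then have "B > 0"
    using assms less_le_trans by auto
  have rgt0[simp]: "\<And>i. i \<in> K \<Longrightarrow> 0 < r i"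
    using assms by auto
  let ?djnt = "pairwise (\<lambda>i j. disjnt (cball (a i) (r i)) (cball (a j) (r j)))"
  have "\<exists>C. \<forall>n. (C n \<subseteq> K \<and>
             (\<forall>i \<in> C n. B/2 ^ n \<le> r i) \<and> ?djnt (C n) \<and>
             (\<forall>i \<in> K. B/2 ^ n < r i
                 \<longrightarrow> (\<exists>j. j \<in> C n \<and>
                         \<not> disjnt (cball (a i) (r i)) (cball (a j) (r j)) \<and>
                         cball (a i) (r i) \<subseteq> ball (a j) (5 * r j)))) \<and> (C n \<subseteq> C(Suc n))"
  proof (rule dependent_nat_choice, safe)
    fix C n
    define D where "D \<equiv> {i \<in> K. B/2 ^ Suc n < r i \<and> (\<forall>j\<in>C. disjnt (cball(a i)(r i)) (cball (a j) (r j)))}"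
    let ?cover_ar = "\<lambda>i j. \<not> disjnt (cball (a i) (r i)) (cball (a j) (r j)) \<and>
                             cball (a i) (r i) \<subseteq> ball (a j) (5 * r j)"
    assume "C \<subseteq> K"
      and Ble: "\<forall>i\<in>C. B/2 ^ n \<le> r i"
      and djntC: "?djnt C"
      and cov_n: "\<forall>i\<in>K. B/2 ^ n < r i \<longrightarrow> (\<exists>j. j \<in> C \<and> ?cover_ar i j)"
    have *: "\<forall>C\<in>chains {C. C \<subseteq> D \<and> ?djnt C}. \<Union>C \<in> {C. C \<subseteq> D \<and> ?djnt C}"
    proof (clarsimp simp: chains_def)
      fix C
      assume C: "C \<subseteq> {C. C \<subseteq> D \<and> ?djnt C}" and "chain\<^sub>\<subseteq> C"
      show "\<Union>C \<subseteq> D \<and> ?djnt (\<Union>C)"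
        unfolding pairwise_def
      proof (intro ballI conjI impI)
        show "\<Union>C \<subseteq> D"
          using C by blast
      next
        fix x y
        assume "x \<in> \<Union>C" and "y \<in> \<Union>C" and "x \<noteq> y"
        then obtain X Y where XY: "x \<in> X" "X \<in> C" "y \<in> Y" "Y \<in> C"
          by blast
        then consider "X \<subseteq> Y" | "Y \<subseteq> X"
          by (meson \<open>chain\<^sub>\<subseteq> C\<close> chain_subset_def)
        then show "disjnt (cball (a x) (r x)) (cball (a y) (r y))"
        proof cases
          case 1
          with C XY \<open>x \<noteq> y\<close> show ?thesis
            unfolding pairwise_def by blast
        next
          case 2
          with C XY \<open>x \<noteq> y\<close> show ?thesis
            unfolding pairwise_def by blast
        qed
      qed
    qed
    obtain E where "E \<subseteq> D" and djntE: "?djnt E" and maximalE: "\<And>X. \<lbrakk>X \<subseteq> D; ?djnt X; E \<subseteq> X\<rbrakk> \<Longrightarrow> X = E"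
      using Zorn_Lemma [OF *] by safe blast
    show "\<exists>L. (L \<subseteq> K \<and>
               (\<forall>i\<in>L. B/2 ^ Suc n \<le> r i) \<and> ?djnt L \<and>
               (\<forall>i\<in>K. B/2 ^ Suc n < r i \<longrightarrow> (\<exists>j. j \<in> L \<and> ?cover_ar i j))) \<and> C \<subseteq> L"
    proof (intro exI conjI ballI)
      show "C \<union> E \<subseteq> K"
        using D_def \<open>C \<subseteq> K\<close> \<open>E \<subseteq> D\<close> by blast
      show "B/2 ^ Suc n \<le> r i" if i: "i \<in> C \<union> E" for i
        using i
      proof
        assume "i \<in> C"
        have "B/2 ^ Suc n \<le> B/2 ^ n"
          using \<open>B > 0\<close> by (simp add: field_split_simps)
        also have "\<dots> \<le> r i"
          using Ble \<open>i \<in> C\<close> by blast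
        finally show ?thesis .
      qed (use D_def \<open>E \<subseteq> D\<close> in auto)
      show "?djnt (C \<union> E)"
        using D_def \<open>C \<subseteq> K\<close> \<open>E \<subseteq> D\<close> djntC djntE
        unfolding pairwise_def disjnt_def by blast
    next
      fix i
      assume "i \<in> K"
      show "B/2 ^ Suc n < r i \<longrightarrow> (\<exists>j. j \<in> C \<union> E \<and> ?cover_ar i j)"
      proof (cases "r i \<le> B/2^n")
        case False
        then show ?thesis
          using cov_n \<open>i \<in> K\<close> by auto
      next
        case True
        have "cball (a i) (r i) \<subseteq> ball (a j) (5 * r j)"
          if less: "B/2 ^ Suc n < r i" and j: "j \<in> C \<union> E"
            and nondis: "\<not> disjnt (cball (a i) (r i)) (cball (a j) (r j))" for j
        proof -
          obtain x where x: "dist (a i) x \<le> r i" "dist (a j) x \<le> r j"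
            using nondis by (force simp: disjnt_def)
          have "dist (a i) (a j) \<le> dist (a i) x + dist x (a j)"
            by (simp add: dist_triangle)
          also have "\<dots> \<le> r i + r j"
            by (metis add_mono_thms_linordered_semiring(1) dist_commute x)
          finally have aij: "dist (a i) (a j) + r i < 5 * r j" if "r i < 2 * r j"
            using that by auto
          show ?thesis
            using j
          proof
            assume "j \<in> C"
            have "B/2^n < 2 * r j"
              using Ble True \<open>j \<in> C\<close> less by auto
            with aij True show "cball (a i) (r i) \<subseteq> ball (a j) (5 * r j)"
              by (auto intro!: cb_sub)
          next
            assume "j \<in> E"
            then have "B/2 ^ n < 2 * r j"
              using D_def \<open>E \<subseteq> D\<close> by auto
            with True have "r i < 2 * r j"
              by auto
            with aij show "cball (a i) (r i) \<subseteq> ball (a j) (5 * r j)"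
              by (auto intro!: cb_sub)
          qed
        qed
      moreover have "\<exists>j. j \<in> C \<union> E \<and> \<not> disjnt (cball (a i) (r i)) (cball (a j) (r j))"
        if "B/2 ^ Suc n < r i"
      proof (rule classical)
        assume NON: "\<not> ?thesis"
        show ?thesis
        proof (cases "i \<in> D")
          case True
          have "insert i E = E"
          proof (rule maximalE)
            show "insert i E \<subseteq> D"
              by (simp add: True \<open>E \<subseteq> D\<close>)
            show "pairwise (\<lambda>i j. disjnt (cball (a i) (r i)) (cball (a j) (r j))) (insert i E)"
              using False NON by (auto simp: pairwise_insert djntE disjnt_sym)
          qed auto
          then show ?thesis
            using \<open>i \<in> K\<close> assms by fastforce
        next
          case False
          with that show ?thesis
            by (auto simp: D_def disjnt_def \<open>i \<in> K\<close>)
        qed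
      qed
      ultimately
      show "B/2 ^ Suc n < r i \<longrightarrow>
            (\<exists>j. j \<in> C \<union> E \<and>
                 \<not> disjnt (cball (a i) (r i)) (cball (a j) (r j)) \<and>
                 cball (a i) (r i) \<subseteq> ball (a j) (5 * r j))"
        by blast
      qed
    qed auto
  qed (use assms in force)
  then obtain F where FK: "\<And>n. F n \<subseteq> K"
               and Fle: "\<And>n i. i \<in> F n \<Longrightarrow> B/2 ^ n \<le> r i"
               and Fdjnt:  "\<And>n. ?djnt (F n)"
               and FF:  "\<And>n i. \<lbrakk>i \<in> K; B/2 ^ n < r i\<rbrakk>
                        \<Longrightarrow> \<exists>j. j \<in> F n \<and> \<not> disjnt (cball (a i) (r i)) (cball (a j) (r j)) \<and>
                                cball (a i) (r i) \<subseteq> ball (a j) (5 * r j)"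
               and inc:  "\<And>n. F n \<subseteq> F(Suc n)"
    by (force simp: all_conj_distrib)
  show thesis
  proof
    have *: "countable I"
      if "I \<subseteq> K" and pw: "pairwise (\<lambda>i j. disjnt (cball (a i) (r i)) (cball (a j) (r j))) I" for I
    proof -
      show ?thesis
      proof (rule countable_image_inj_on [of "\<lambda>i. cball(a i)(r i)"])
        show "countable ((\<lambda>i. cball (a i) (r i)) ` I)"
        proof (rule countable_disjoint_nonempty_interior_subsets)
          show "disjoint ((\<lambda>i. cball (a i) (r i)) ` I)"
            by (auto simp: dest: pairwiseD [OF pw] intro: pairwise_imageI)
          show "\<And>S. \<lbrakk>S \<in> (\<lambda>i. cball (a i) (r i)) ` I; interior S = {}\<rbrakk> \<Longrightarrow> S = {}"
          proof -
            fix S assume S: "S \<in> (\<lambda>i. cball (a i) (r i)) ` I" "interior S = {}"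
            then obtain i where i: "i \<in> I" "S = cball (a i) (r i)" by auto
            have "ball (a i) (r i) \<subseteq> interior S" using i by (simp add: interior_maximal ball_subset_cball)
            moreover have "a i \<in> ball (a i) (r i)" using i \<open>I \<subseteq> K\<close> assms by auto
            ultimately show "S = {}" using S(2) by auto
          qed
        qed
      next
        show "inj_on (\<lambda>i. cball (a i) (r i)) I"
        proof (rule inj_onI, rule ccontr)
          fix x y assume xy: "x \<in> I" "y \<in> I" "cball (a x) (r x) = cball (a y) (r y)" "x \<noteq> y"
          then have "disjnt (cball (a x) (r x)) (cball (a y) (r y))" using pw xy unfolding pairwise_def by blast
          moreover have "a x \<in> cball (a x) (r x)" using assms xy(1) \<open>I \<subseteq> K\<close> by (metis centre_in_cball less_le subsetD)
          ultimately show False using xy(3) by (auto simp: disjnt_def)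
        qed
      qed
    qed
    show "(Union(range F)) \<subseteq> K"
      using FK by blast
    moreover show "pairwise (\<lambda>i j. disjnt (cball (a i) (r i)) (cball (a j) (r j))) (Union(range F))"
    proof (rule pairwise_chain_Union)
      show "chain\<^sub>\<subseteq> (range F)"
        unfolding chain_subset_def by clarify (meson inc lift_Suc_mono_le linear subsetCE)
    qed (use Fdjnt in blast)
    ultimately show "countable (Union(range F))"
      by (blast intro: *)
  next
    fix i assume "i \<in> K"
    then obtain n where "(1/2) ^ n < r i / B"
      using  \<open>B > 0\<close> assms real_arch_pow_inv by fastforce
    then have B2: "B/2 ^ n < r i"
      using \<open>B > 0\<close> by (simp add: field_split_simps)
    have "0 < r i" "r i \<le> B"
      by (auto simp: \<open>i \<in> K\<close> assms)
    show "\<exists>j. j \<in> (Union(range F)) \<and>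
          \<not> disjnt (cball (a i) (r i)) (cball (a j) (r j)) \<and>
          cball (a i) (r i) \<subseteq> ball (a j) (5 * r j)"
      using FF [OF \<open>i \<in> K\<close> B2] by auto
  qed
qed



lemma vit_ex:
  fixes Z :: "'a::polish_space set"
  assumes rad: "\<And>i. i \<in> Z \<Longrightarrow> 0 < rr i \<and> rr i \<le> 1"
  shows "\<exists>C. countable C \<and> C \<subseteq> Z \<and>
      pairwise (\<lambda>i j. disjnt (cball i (rr i)) (cball j (rr j))) C \<and>
      (\<forall>i\<in>Z. \<exists>j. j \<in> C \<and> \<not> disjnt (cball i (rr i)) (cball j (rr j)) \<and>
                        cball i (rr i) \<subseteq> ball j (5 * rr j))"
  apply (rule vitali_metric[of Z rr 1 "\<lambda>x. x"])
   apply (erule rad)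
  subgoal for C
    apply (rule_tac x=C in exI)
    apply (intro conjI ballI)
       apply assumption
      apply assumption
     apply assumption
    apply (simp only:)
    done
  done

context dm begin

lemma borel_UN: "(\<And>n::nat. S n \<in> sets borel) \<Longrightarrow> (\<Union>n. S n) \<in> sets borel"
  by (rule sets.countable_nat_UN) auto

lemma density_Z:
  assumes H: "H \<in> sets borel" and s: "s > 0"
  shows "mu {x \<in> H \<inter> ball z R. \<forall>r0>0. \<exists>r. 0 < r \<and> r < r0 \<and>
            ennreal s * mu (ball x r) < mu (ball x r - H)} = 0"
proof -
  define Z where "Z = {x \<in> H \<inter> ball z R. \<forall>r0>0. \<exists>r. 0 < r \<and> r < r0 \<and>
            ennreal s * mu (ball x r) < mu (ball x r - H)}"
  have bound: "mu Z \<le> 0 + ennreal e" if e: "e > 0" for e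
  proof -
    define \<delta> where "\<delta> = e * s / K^3"
    have \<delta>: "\<delta> > 0" using e s Kpos by (simp add: \<delta>_def)
    have HB: "H \<inter> ball z R \<in> sets borel" using H by auto
    obtain V where V: "open V" "H \<inter> ball z R \<subseteq> V" "mu (V - (H \<inter> ball z R)) < ennreal \<delta>"
      using outer_reg[OF HB _ \<delta>] by blast
    have "\<forall>x\<in>Z. \<exists>r. 0 < r \<and> r \<le> 1 \<and> cball x r \<subseteq> V \<and> ennreal s * mu (ball x r) < mu (ball x r - H)"
    proof
      fix x assume x: "x \<in> Z"
      then have xV: "x \<in> V" using V(2) unfolding Z_def by blast
      then obtain \<epsilon> where \<epsilon>: "\<epsilon> > 0" "ball x \<epsilon> \<subseteq> V" using V(1) open_contains_ball by blast
      define r0 where "r0 = min 1 (\<epsilon>/2)"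
      have r0: "r0 > 0" using \<epsilon> by (simp add: r0_def)
      have "\<forall>r0>0. \<exists>r. 0 < r \<and> r < r0 \<and> ennreal s * mu (ball x r) < mu (ball x r - H)"
        using x unfolding Z_def by blast
      then obtain r where r: "0 < r" "r < r0" "ennreal s * mu (ball x r) < mu (ball x r - H)"
        using r0 by blast
      have re: "r < \<epsilon>" "r \<le> 1" using r(2) \<epsilon>(1) by (simp_all add: r0_def)
      have "cball x r \<subseteq> ball x \<epsilon>"
      proof
        fix y assume "y \<in> cball x r"
        then have "dist x y \<le> r" by simp
        then show "y \<in> ball x \<epsilon>" using re by simp
      qed
      then have "cball x r \<subseteq> V" using \<epsilon>(2) by blast
      then show "\<exists>r. 0 < r \<and> r \<le> 1 \<and> cball x r \<subseteq> V \<and> ennreal s * mu (ball x r) < mu (ball x r - H)"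
        using r re by blast
    qed
    then have "\<exists>rr. \<forall>x\<in>Z. 0 < rr x \<and> rr x \<le> 1 \<and> cball x (rr x) \<subseteq> V \<and>
        ennreal s * mu (ball x (rr x)) < mu (ball x (rr x) - H)" by (rule bchoice)
    then obtain rr where rr0: "\<forall>x\<in>Z. 0 < rr x \<and> rr x \<le> 1 \<and> cball x (rr x) \<subseteq> V \<and>
        ennreal s * mu (ball x (rr x)) < mu (ball x (rr x) - H)" by (elim exE)
    have rr: "\<And>x. x \<in> Z \<Longrightarrow> 0 < rr x \<and> rr x \<le> 1 \<and> cball x (rr x) \<subseteq> V \<and>
        ennreal s * mu (ball x (rr x)) < mu (ball x (rr x) - H)" using rr0 by (rule bspec)
    have rad: "\<And>i. i \<in> Z \<Longrightarrow> 0 < rr i \<and> rr i \<le> 1" using rr by blast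
    have ex: "\<exists>C. countable C \<and> C \<subseteq> Z \<and>
      pairwise (\<lambda>i j. disjnt (cball i (rr i)) (cball j (rr j))) C \<and>
      (\<forall>i\<in>Z. \<exists>j. j \<in> C \<and> \<not> disjnt (cball i (rr i)) (cball j (rr j)) \<and>
                        cball i (rr i) \<subseteq> ball j (5 * rr j))"
      by (rule vit_ex) (erule rad)
    then obtain C where C0: "countable C \<and> C \<subseteq> Z \<and>
      pairwise (\<lambda>i j. disjnt (cball i (rr i)) (cball j (rr j))) C \<and>
      (\<forall>i\<in>Z. \<exists>j. j \<in> C \<and> \<not> disjnt (cball i (rr i)) (cball j (rr j)) \<and>
                        cball i (rr i) \<subseteq> ball j (5 * rr j))"
      by (elim exE)
    have C: "countable C" "C \<subseteq> Z" "pairwise (\<lambda>i j. disjnt (cball i (rr i)) (cball j (rr j))) C"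
      using C0 by simp_all
    have C4: "\<And>i. i \<in> Z \<Longrightarrow> \<exists>j. j \<in> C \<and> \<not> disjnt (cball i (rr i)) (cball j (rr j)) \<and>
                        cball i (rr i) \<subseteq> ball j (5 * rr j)" using C0 by (elim conjE) (erule bspec)
    define idx where "idx = inv_into C (to_nat_on C)"
    define sel where "sel n \<longleftrightarrow> n \<in> to_nat_on C ` C" for n
    define SB where "SB n = (if sel n then ball (idx n) (rr (idx n)) else {})" for n
    define BB where "BB n = (if sel n then ball (idx n) (8 * rr (idx n)) else {})" for n
    have inj: "inj_on (to_nat_on C) C" using C(1) by blast
    have idxC: "sel n \<Longrightarrow> idx n \<in> C" for n
      unfolding sel_def idx_def by (auto intro: inv_into_into)
    have idxn: "sel n \<Longrightarrow> to_nat_on C (idx n) = n" for n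
      unfolding sel_def idx_def by (auto intro: f_inv_into_f)
    have selj: "j \<in> C \<Longrightarrow> sel (to_nat_on C j) \<and> idx (to_nat_on C j) = j" for j
      unfolding sel_def idx_def using inj by (auto intro: inv_into_f_f)
    have cover: "Z \<subseteq> (\<Union>n. BB n)"
    proof
      fix x assume x: "x \<in> Z"
      obtain j where j: "j \<in> C" "cball x (rr x) \<subseteq> ball j (5 * rr j)" using C4[OF x] by blast
      have "rr j > 0" using rr j C(2) by blast
      then have "ball j (5 * rr j) \<subseteq> ball j (8 * rr j)" by (auto simp: subset_iff)
      moreover have "x \<in> cball x (rr x)" using rr[OF x] by simp
      ultimately have xin: "x \<in> ball j (8 * rr j)" using j by blast
      have "x \<in> BB (to_nat_on C j)" using xin selj[OF j(1)] unfolding BB_def by simp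
      then show "x \<in> (\<Union>n. BB n)" by blast
    qed
    have BBle: "mu (BB n) \<le> ennreal (K^3) * mu (SB n)" for n
    proof (cases "sel n")
      case True
      have "rr (idx n) > 0" using rr idxC[OF True] C(2) by blast
      then have "mu (ball (idx n) (2^3 * rr (idx n))) \<le> ennreal (K^3) * mu (ball (idx n) (rr (idx n)))"
        by (rule dbl_iter)
      then show ?thesis using True by (simp add: BB_def SB_def)
    qed (simp add: BB_def SB_def)
    have SBle: "mu (SB n) \<le> ennreal (1/s) * mu (SB n - H)" for n
    proof (cases "sel n")
      case True
      have "ennreal s * mu (SB n) \<le> mu (SB n - H)"
        using rr[of "idx n"] idxC[OF True] C(2) True by (auto simp: SB_def intro: less_imp_le)
      then have "ennreal (1/s) * (ennreal s * mu (SB n)) \<le> ennreal (1/s) * mu (SB n - H)"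
        by (rule mult_left_mono) simp
      moreover have "ennreal (1/s) * (ennreal s * mu (SB n)) = mu (SB n)"
      proof -
        have "ennreal (1/s) * ennreal s = ennreal ((1/s) * s)" using s by (subst ennreal_mult) auto
        also have "(1/s) * s = 1" using s by simp
        finally show ?thesis by (metis mult.assoc ennreal_1 mult_1)
      qed
      ultimately show ?thesis by simp
    qed (simp add: SB_def)
    have disj: "disjoint_family (\<lambda>n. SB n - H)"
      unfolding disjoint_family_on_def
    proof (intro ballI impI)
      fix m n :: nat assume mn: "m \<noteq> n"
      show "(SB m - H) \<inter> (SB n - H) = {}"
      proof (cases "sel m \<and> sel n")
        case True
        then have "idx m \<noteq> idx n" using idxn mn by metis
        then have "disjnt (cball (idx m) (rr (idx m))) (cball (idx n) (rr (idx n)))"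
          using C(3) idxC True unfolding pairwise_def by blast
        then have "ball (idx m) (rr (idx m)) \<inter> ball (idx n) (rr (idx n)) = {}"
          unfolding disjnt_def by (metis (no_types) ball_subset_cball Int_mono subset_empty)
        then show ?thesis using True by (auto simp: SB_def)
      qed (auto simp: SB_def)
    qed
    have SBsub: "(\<Union>n. SB n - H) \<subseteq> V - (H \<inter> ball z R)"
    proof -
      have "SB n \<subseteq> V" for n
      proof (cases "sel n")
        case True
        have "idx n \<in> Z" using idxC[OF True] C(2) by blast
        then have "cball (idx n) (rr (idx n)) \<subseteq> V" using rr by blast
        then have "ball (idx n) (rr (idx n)) \<subseteq> V" using ball_subset_cball[of "idx n" "rr (idx n)"] by blast
        then show ?thesis using True by (simp add: SB_def)
      qed (simp add: SB_def)
      then show ?thesis by blast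
    qed
    have SBborel: "SB n - H \<in> sets borel" for n using H by (auto simp: SB_def)
    have rSB: "range (\<lambda>n. SB n - H) \<subseteq> sets borel" using SBborel by blast
    have sumSB: "(\<Sum>n. mu (SB n - H)) = mu (\<Union>n. SB n - H)"
      by (rule ca_borel[unfolded countably_additive_def, rule_format, OF rSB disj borel_UN[OF SBborel]])
    have "mu Z \<le> mu (\<Union>n. BB n)" by (rule mono[OF cover])
    also have "\<dots> \<le> (\<Sum>n. mu (BB n))" by (rule csub)
    also have "\<dots> \<le> (\<Sum>n. ennreal (K^3) * (ennreal (1/s) * mu (SB n - H)))"
    proof (rule suminf_le[OF _ summableI summableI])
      fix n
      have "mu (BB n) \<le> ennreal (K^3) * mu (SB n)" by (rule BBle)
      also have "\<dots> \<le> ennreal (K^3) * (ennreal (1/s) * mu (SB n - H))"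
        by (rule mult_left_mono[OF SBle]) simp
      finally show "mu (BB n) \<le> ennreal (K^3) * (ennreal (1/s) * mu (SB n - H))" .
    qed
    also have "\<dots> = ennreal (K^3) * (ennreal (1/s) * mu (\<Union>n. SB n - H))"
      by (simp add: sumSB)
    also have "\<dots> \<le> ennreal (K^3) * (ennreal (1/s) * ennreal \<delta>)"
    proof -
      have "mu (\<Union>n. SB n - H) \<le> ennreal \<delta>"
        using mono[OF SBsub] V(3) by simp
      then show ?thesis by (intro mult_left_mono) auto
    qed
    also have "\<dots> = ennreal e"
    proof -
      have "K^3 * ((1/s) * \<delta>) = e" using Kpos s by (simp add: \<delta>_def field_simps)
      moreover have "ennreal (K^3) * (ennreal (1/s) * ennreal \<delta>) = ennreal (K^3 * ((1/s) * \<delta>))"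
      proof -
        have "ennreal (K^3 * ((1/s)*\<delta>)) = ennreal (K^3) * ennreal ((1/s)*\<delta>)"
          using Kpos s \<delta> by (intro ennreal_mult) auto
        also have "ennreal ((1/s)*\<delta>) = ennreal (1/s) * ennreal \<delta>" using s \<delta> by (intro ennreal_mult) auto
        finally show ?thesis by simp
      qed
      ultimately show ?thesis by simp
    qed
    finally show ?thesis by simp
  qed
  have "mu Z \<le> 0"
  proof (rule ennreal_le_epsilon)
    fix e :: real assume "0 < e" then show "mu Z \<le> 0 + ennreal e" by (rule bound)
  qed
  then have "mu Z = 0" by (simp only: le_zero_eq)
  then show ?thesis unfolding Z_def .
qed

end


lemma ratio_le:
  fixes a b :: ennreal
  assumes "a \<le> ennreal c * b" "b < \<infinity>" "0 < b" "c \<ge> 0"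
  shows "enn2real a / enn2real b \<le> c"
proof -
  have "enn2real a \<le> enn2real (ennreal c * b)"
    using assms by (intro enn2real_mono) (auto simp: ennreal_mult_less_top)
  also have "\<dots> = c * enn2real b" using assms(4) by (simp add: enn2real_mult)
  finally have "enn2real a \<le> c * enn2real b" .
  moreover have "enn2real b > 0" using assms by (simp add: enn2real_positive_iff)
  ultimately show ?thesis by (simp add: divide_le_eq)
qed

context dm begin

lemma density_borel:
  assumes H: "H \<in> sets borel"
  shows "mu {x \<in> H. \<not> mu_nbhd mu x H} = 0"
proof -
  define z :: 'a where "z = undefined"
  define Zs where "Zs = (\<lambda>(R::nat) (m::nat). {x \<in> H \<inter> ball z (real R). \<forall>r0>0. \<exists>r. 0 < r \<and> r < r0 \<and>
            ennreal (1 / real (Suc m)) * mu (ball x r) < mu (ball x r - H)})"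
  have Z0: "mu (Zs R m) = 0" for R m
    unfolding Zs_def by (rule density_Z[OF H]) simp
  have N0: "mu (\<Union>R. \<Union>m. Zs R m) = 0"
    by (rule null_union, rule null_union, rule Z0)
  have "{x \<in> H. \<not> mu_nbhd mu x H} \<subseteq> (\<Union>R. \<Union>m. Zs R m)"
  proof
    fix x assume x: "x \<in> {x \<in> H. \<not> mu_nbhd mu x H}"
    show "x \<in> (\<Union>R. \<Union>m. Zs R m)"
    proof (rule ccontr)
      assume nx: "x \<notin> (\<Union>R. \<Union>m. Zs R m)"
      define R where "R = nat \<lceil>dist z x\<rceil> + 1"
      have xR: "x \<in> ball z (real R)" unfolding R_def by (simp; linarith)
      have good: "\<exists>r0>0. \<forall>r. 0 < r \<and> r < r0 \<longrightarrow> mu (ball x r - H) \<le> ennreal (1 / real (Suc m)) * mu (ball x r)" for m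
      proof -
        have "x \<notin> Zs R m" using nx by blast
        then show ?thesis using x xR unfolding Zs_def by (auto simp: not_less) (use not_le in blast)
      qed
      have "((\<lambda>r. enn2real (mu (ball x r - H)) / enn2real (mu (ball x r))) \<longlongrightarrow> 0) (at_right 0)"
        unfolding tendsto_iff
      proof (intro allI impI)
        fix e :: real assume e: "e > 0"
        obtain m where m: "inverse (real (Suc m)) < e" using reals_Archimedean[OF e] by blast
        obtain r0 where r0: "r0 > 0" "\<And>r. 0 < r \<and> r < r0 \<Longrightarrow> mu (ball x r - H) \<le> ennreal (1 / real (Suc m)) * mu (ball x r)"
          using good[of m] by blast
        show "\<forall>\<^sub>F r in at_right 0. dist (enn2real (mu (ball x r - H)) / enn2real (mu (ball x r))) 0 < e"
          unfolding eventually_at_right_field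
        proof (intro exI[of _ r0] conjI allI impI)
          show "r0 > 0" by (rule r0(1))
          fix r :: real assume r: "0 < r" "r < r0"
          have "enn2real (mu (ball x r - H)) / enn2real (mu (ball x r)) \<le> 1 / real (Suc m)"
            by (rule ratio_le[OF r0(2)[OF conjI[OF r]] ball_fin ball_pos[OF r(1)]]) simp
          moreover have "enn2real (mu (ball x r - H)) / enn2real (mu (ball x r)) \<ge> 0" by simp
          ultimately show "dist (enn2real (mu (ball x r - H)) / enn2real (mu (ball x r))) 0 < e"
            using m by (simp add: inverse_eq_divide)
        qed
      qed
      then have "mu_nbhd mu x H" using x H unfolding mu_nbhd_def by blast
      then show False using x by blast
    qed
  qed
  then show ?thesis using null_subset[OF N0] by blast
qed

end


lemma ratio_lt:
  fixes a b :: ennreal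
  assumes "enn2real a / enn2real b < c" "a < \<infinity>" "b < \<infinity>" "0 < b"
  shows "a < ennreal c * b"
proof -
  have bpos: "enn2real b > 0" using assms by (simp add: enn2real_positive_iff)
  then have "enn2real a < c * enn2real b" using assms(1) by (simp add: divide_less_eq)
  moreover have "enn2real a \<ge> 0" by simp
  ultimately have c: "c > 0" using bpos by (smt (verit) mult_nonpos_nonneg)
  have "ennreal (enn2real a) < ennreal (c * enn2real b)"
    using \<open>enn2real a < c * enn2real b\<close> by (subst ennreal_less_iff) auto
  also have "ennreal (c * enn2real b) = ennreal c * ennreal (enn2real b)"
    using c by (simp add: ennreal_mult)
  finally show ?thesis using assms by simp
qed

lemma half_contra:
  fixes x :: ennreal
  assumes "x \<le> ennreal (1/2) * x" "x < \<infinity>"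
  shows "x = 0"
proof (cases x rule: ennreal_cases)
  case (real r)
  have e: "ennreal (1/2 * r) = ennreal (1/2) * ennreal r" using real by (intro ennreal_mult) auto
  have "ennreal r \<le> ennreal (1/2 * r)" using assms(1) unfolding e real(2) .
  then have "r \<le> 1/2 * r" using real by (subst (asm) ennreal_le_iff) auto
  then show ?thesis using real by simp
next
  case top then show ?thesis using assms by simp
qed

context dm begin

lemma nbhd_small:
  assumes "((\<lambda>r. enn2real (mu (ball x r - B)) / enn2real (mu (ball x r))) \<longlongrightarrow> 0) (at_right 0)"
    and e: "e > 0"
  shows "\<exists>r0>0. \<forall>r. 0 < r \<and> r < r0 \<longrightarrow> mu (ball x r - B) < ennreal e * mu (ball x r)"
proof -
  have "\<forall>\<^sub>F r in at_right 0. dist (enn2real (mu (ball x r - B)) / enn2real (mu (ball x r))) 0 < e"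
    using assms(1) e unfolding tendsto_iff by blast
  then obtain r0 where r0: "r0 > 0" "\<And>r. r > 0 \<Longrightarrow> r < r0 \<Longrightarrow>
      dist (enn2real (mu (ball x r - B)) / enn2real (mu (ball x r))) 0 < e"
    unfolding eventually_at_right_field by auto
  show ?thesis
  proof (intro exI[of _ r0] conjI allI impI)
    show "r0 > 0" by (rule r0(1))
    fix r assume r: "0 < r \<and> r < r0"
    have fin: "mu (ball x r - B) < \<infinity>" using mono[of "ball x r - B" "ball x r"] ball_fin[of x r] by auto
    have "enn2real (mu (ball x r - B)) / enn2real (mu (ball x r)) < e"
      using r0(2)[of r] r by (simp add: dist_real_def abs_less_iff)
    then show "mu (ball x r - B) < ennreal e * mu (ball x r)"
      using ratio_lt fin ball_fin ball_pos r by blast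
  qed
qed

lemma ball_nbhd:
  assumes "\<delta> > 0"
  shows "mu_nbhd mu x (ball x \<delta>)"
  unfolding mu_nbhd_def
proof (intro conjI bexI[of _ "ball x \<delta>"])
  show "x \<in> ball x \<delta>" using assms by simp
  show "ball x \<delta> \<in> sets borel" by simp
  show "ball x \<delta> \<subseteq> ball x \<delta>" by simp
  have "\<forall>\<^sub>F r in at_right 0. enn2real (mu (ball x r - ball x \<delta>)) / enn2real (mu (ball x r)) = 0"
    unfolding eventually_at_right_field
  proof (intro exI[of _ \<delta>] conjI allI impI)
    show "\<delta> > 0" by (rule assms)
    fix r :: real assume "0 < r" "r < \<delta>"
    then have "ball x r - ball x \<delta> = {}" by auto
    then have "mu (ball x r - ball x \<delta>) = 0" by (metis mu_empty)
    then show "enn2real (mu (ball x r - ball x \<delta>)) / enn2real (mu (ball x r)) = 0" by simp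
  qed
  then show "((\<lambda>r. enn2real (mu (ball x r - ball x \<delta>)) / enn2real (mu (ball x r))) \<longlongrightarrow> 0) (at_right 0)"
    by (rule tendsto_eventually)
qed

lemma nbhd_mono: "mu_nbhd mu x U \<Longrightarrow> U \<subseteq> U' \<Longrightarrow> mu_nbhd mu x U'"
  unfolding mu_nbhd_def by blast

lemma univ_nbhd: "mu_nbhd mu x UNIV"
  using nbhd_mono[OF ball_nbhd[of 1 x]] by simp

lemma acc_islimpt:
  assumes "mu_accumulation mu x A"
  shows "x islimpt A"
proof (rule ccontr)
  assume "\<not> x islimpt A"
  then obtain \<delta> where \<delta>: "\<delta> > 0" "\<And>y. y \<in> A \<Longrightarrow> y \<noteq> x \<Longrightarrow> \<not> dist y x < \<delta>"
    unfolding islimpt_approachable by blast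
  have "A \<inter> ball x \<delta> - {x} = {}"
  proof safe
    fix w assume "w \<in> A" "w \<in> ball x \<delta>" "w \<notin> {}"
    then show "w = x" using \<delta>(2)[of w] by (auto simp: dist_commute)
  qed
  moreover have "A \<inter> ball x \<delta> - {x} \<noteq> {}"
    using assms ball_nbhd[OF \<delta>(1)] unfolding mu_accumulation_def by blast
  ultimately show False by blast
qed

lemma acc_of_density:
  assumes nb: "mu_nbhd mu x C" and lp: "x islimpt (UNIV :: 'a set)"
  shows "mu_accumulation mu x C"
  unfolding mu_accumulation_def
proof (intro allI impI notI)
  fix U assume U: "mu_nbhd mu x U" and emp: "C \<inter> U - {x} = {}"
  obtain BC where BC: "BC \<in> sets borel" "BC \<subseteq> C"
    "((\<lambda>r. enn2real (mu (ball x r - BC)) / enn2real (mu (ball x r))) \<longlongrightarrow> 0) (at_right 0)"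
    using nb unfolding mu_nbhd_def by blast
  obtain BU where BU: "BU \<in> sets borel" "BU \<subseteq> U"
    "((\<lambda>r. enn2real (mu (ball x r - BU)) / enn2real (mu (ball x r))) \<longlongrightarrow> 0) (at_right 0)"
    using U unfolding mu_nbhd_def by blast
  define \<kappa> where "\<kappa> = 1 / (4 * K^3)"
  have \<kappa>: "\<kappa> > 0" using Kpos by (simp add: \<kappa>_def)
  obtain r1 where r1: "r1 > 0" "\<And>r. 0 < r \<and> r < r1 \<Longrightarrow> mu (ball x r - BC) < ennreal \<kappa> * mu (ball x r)"
    using nbhd_small[OF BC(3) \<kappa>] by blast
  obtain r2 where r2: "r2 > 0" "\<And>r. 0 < r \<and> r < r2 \<Longrightarrow> mu (ball x r - BU) < ennreal \<kappa> * mu (ball x r)"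
    using nbhd_small[OF BU(3) \<kappa>] by blast
  have "min r1 r2 / 2 > 0" using r1 r2 by simp
  then obtain y where y: "y \<noteq> x" "dist y x < min r1 r2 / 2"
    using lp unfolding islimpt_approachable by blast
  define t where "t = dist y x"
  have t: "t > 0" "2 * t < r1" "2 * t < r2" using y by (auto simp: t_def)
  have sub1: "ball y (t/2) \<subseteq> (ball x (2*t) - BC) \<union> (ball x (2*t) - BU)"
  proof
    fix w assume w: "w \<in> ball y (t/2)"
    have d1: "dist x w \<le> dist x y + dist y w" by (rule dist_triangle)
    have d2: "dist y w < t/2" using w by simp
    have d3: "dist x y = t" by (simp add: t_def dist_commute)
    have "dist x w < 2*t" using d1 d2 d3 t(1) by linarith
    then have "w \<in> ball x (2*t)" by simp
    moreover have "w \<noteq> x" using d2 d3 t(1) by (auto simp: dist_commute)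
    ultimately show "w \<in> (ball x (2*t) - BC) \<union> (ball x (2*t) - BU)"
      using emp BC(2) BU(2) by blast
  qed
  define M where "M = mu (ball x (2*t))"
  have "mu (ball y (t/2)) \<le> mu ((ball x (2*t) - BC) \<union> (ball x (2*t) - BU))"
    by (rule mono[OF sub1])
  also have "\<dots> \<le> mu (ball x (2*t) - BC) + mu (ball x (2*t) - BU)"
    by (rule sub2)
  also have "\<dots> \<le> ennreal \<kappa> * M + ennreal \<kappa> * M"
  proof (rule add_mono)
    have "0 < 2*t \<and> 2*t < r1" using t by simp
    then show "mu (ball x (2*t) - BC) \<le> ennreal \<kappa> * M" unfolding M_def using r1(2) less_imp_le by blast
    have "0 < 2*t \<and> 2*t < r2" using t by simp
    then show "mu (ball x (2*t) - BU) \<le> ennreal \<kappa> * M" unfolding M_def using r2(2) less_imp_le by blast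
  qed
  also have "\<dots> = ennreal (2 * \<kappa>) * M"
  proof -
    have e1: "ennreal (\<kappa> + \<kappa>) = ennreal \<kappa> + ennreal \<kappa>" using \<kappa> by (intro ennreal_plus) auto
    have e2: "\<kappa> + \<kappa> = 2 * \<kappa>" by simp
    have "ennreal (2 * \<kappa>) = ennreal \<kappa> + ennreal \<kappa>" using e1 unfolding e2 .
    then show ?thesis by (simp add: distrib_right)
  qed
  finally have a: "mu (ball y (t/2)) \<le> ennreal (2 * \<kappa>) * M" .
  have "ball x (2*t) \<subseteq> ball y (2^3 * (t/2))"
  proof
    fix w assume w: "w \<in> ball x (2*t)"
    have f1: "dist y w \<le> dist y x + dist x w" by (rule dist_triangle)
    have f2: "dist x w < 2*t" using w by simp
    have f3: "dist y x = t" by (simp add: t_def)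
    have "dist y w < 4*t" using f1 f2 f3 t(1) by linarith
    then show "w \<in> ball y (2^3 * (t/2))" by simp
  qed
  then have "M \<le> mu (ball y (2^3 * (t/2)))" unfolding M_def by (rule mono)
  also have "\<dots> \<le> ennreal (K^3) * mu (ball y (t/2))"
    by (rule dbl_iter) (simp add: t(1))
  finally have "M \<le> ennreal (K^3) * mu (ball y (t/2))" .
  then have "ennreal (2 * \<kappa>) * M \<le> ennreal (2 * \<kappa>) * (ennreal (K^3) * mu (ball y (t/2)))"
    by (rule mult_left_mono) simp
  also have "\<dots> = ennreal (1/2) * mu (ball y (t/2))"
  proof -
    have "ennreal (2 * \<kappa>) * ennreal (K^3) = ennreal (2 * \<kappa> * K^3)"
      using \<kappa> Kpos by (simp add: ennreal_mult)
    also have "2 * \<kappa> * K^3 = 1/2" using Kpos by (simp add: \<kappa>_def)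
    finally show ?thesis by (simp add: mult.assoc[symmetric])
  qed
  finally have "mu (ball y (t/2)) \<le> ennreal (1/2) * mu (ball y (t/2))" using a by (rule order_trans[rotated])
  then have "mu (ball y (t/2)) = 0" by (rule half_contra[OF _ ball_fin])
  moreover have "mu (ball y (t/2)) > 0" using ball_pos t(1) by simp
  ultimately show False by simp
qed

lemma borel_measurable_mu: "S \<in> sets borel \<Longrightarrow> mu_measurable mu S"
  unfolding mu_measurable_def using meas by blast

lemma measurable_diff_null:
  assumes S: "mu_measurable mu S" and N: "mu N = 0"
  shows "mu_measurable mu (S - N)"
  unfolding mu_measurable_def
proof
  fix T
  have le1: "mu T \<le> mu (T \<inter> (S - N)) + mu (T - (S - N))"
  proof -
    have "T \<subseteq> (T \<inter> (S - N)) \<union> (T - (S - N))" by blast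
    then have "mu T \<le> mu ((T \<inter> (S - N)) \<union> (T - (S - N)))" by (rule mono)
    also have "\<dots> \<le> mu (T \<inter> (S - N)) + mu (T - (S - N))" by (rule sub2)
    finally show ?thesis .
  qed
  have "T - (S - N) \<subseteq> (T - S) \<union> (T \<inter> N)" by blast
  then have "mu (T - (S - N)) \<le> mu ((T - S) \<union> (T \<inter> N))" by (rule mono)
  also have "\<dots> \<le> mu (T - S) + mu (T \<inter> N)" by (rule sub2)
  also have "mu (T \<inter> N) = 0" using null_subset[OF N] by blast
  finally have "mu (T - (S - N)) \<le> mu (T - S)" by simp
  moreover have "mu (T \<inter> (S - N)) \<le> mu (T \<inter> S)" by (rule mono) blast
  ultimately have "mu (T \<inter> (S - N)) + mu (T - (S - N)) \<le> mu (T \<inter> S) + mu (T - S)" by (rule add_mono[rotated])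
  also have "\<dots> = mu T"
  proof -
    have "mu T = mu (T \<inter> S) + mu (T - S)" using S unfolding mu_measurable_def by blast
    then show ?thesis by (rule sym)
  qed
  finally have le2: "mu (T \<inter> (S - N)) + mu (T - (S - N)) \<le> mu T" .
  show "mu T = mu (T \<inter> (S - N)) + mu (T - (S - N))" by (rule antisym[OF le1 le2])
qed

end


context dm begin

lemma dir2:
  fixes D :: "('a \<times> 'b::metric_space \<times> ('a set \<times> ('a \<Rightarrow> 'b)) set) set"
  assumes hyp: "\<forall>f :: 'a \<Rightarrow> 'b. ae_D_differentiable mu D UNIV f"
  shows "differentiably_complete mu D"
  unfolding differentiably_complete_def
proof (intro allI impI)
  fix C :: "'a set" and g :: "'a \<Rightarrow> 'b"
  assume asm: "closed C \<and> C \<noteq> {} \<and> (\<exists>L. L-lipschitz_on C g)"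
  then have C: "closed C" "C \<noteq> {}" by auto
  from asm obtain L where L: "L-lipschitz_on C g" by blast
  have L0: "L \<ge> 0" by (rule lipschitz_on_nonneg[OF L])
  have "\<forall>y. \<exists>c. y \<notin> C \<longrightarrow> c \<in> C \<and> dist y c \<le> 2 * infdist y C"
  proof
    fix y show "\<exists>c. y \<notin> C \<longrightarrow> c \<in> C \<and> dist y c \<le> 2 * infdist y C"
    proof (cases "y \<in> C")
      case True then show ?thesis by blast
    next
      case False
      have pos: "infdist y C > 0" by (rule infdist_pos_not_in_closed[OF C(1) C(2) False])
      have bdd: "bdd_below ((\<lambda>a. dist y a) ` C)" by (rule bdd_belowI[of _ 0]) auto
      have "(INF a\<in>C. dist y a) < 2 * infdist y C" using pos infdist_notempty[OF C(2), of y] by simp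
      then obtain a where "a \<in> C" "dist y a < 2 * infdist y C"
        using cINF_less_iff[OF C(2) bdd] by blast
      then show ?thesis by (intro exI[of _ a]) simp
    qed
  qed
  then have "\<exists>cc. \<forall>y. y \<notin> C \<longrightarrow> cc y \<in> C \<and> dist y (cc y) \<le> 2 * infdist y C" by (rule choice)
  then obtain cc where cc: "\<forall>y. y \<notin> C \<longrightarrow> cc y \<in> C \<and> dist y (cc y) \<le> 2 * infdist y C" by (elim exE)
  define f where "f y = (if y \<in> C then g y else g (cc y))" for y
  have fbound: "dist (f y) (f x) \<le> 3 * L * dist y x" if x: "x \<in> C" for x y
  proof (cases "y \<in> C")
    case True
    then have "dist (f y) (f x) \<le> L * dist y x" using x lipschitz_onD[OF L True x] by (simp add: f_def)
    also have "\<dots> \<le> 3 * L * dist y x" using L0 by (simp add: mult_right_mono)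
    finally show ?thesis .
  next
    case False
    have c1: "cc y \<in> C" "dist y (cc y) \<le> 2 * infdist y C" using cc False by auto
    have "infdist y C \<le> dist y x" by (rule infdist_le[OF x])
    moreover have "dist (cc y) x \<le> dist (cc y) y + dist y x" by (rule dist_triangle)
    ultimately have dc: "dist (cc y) x \<le> 3 * dist y x" using c1(2) by (simp add: dist_commute)
    have "dist (f y) (f x) = dist (g (cc y)) (g x)" using False x by (simp add: f_def)
    also have "\<dots> \<le> L * dist (cc y) x" by (rule lipschitz_onD[OF L c1(1) x])
    also have "\<dots> \<le> L * (3 * dist y x)" by (rule mult_left_mono[OF dc L0])
    finally show ?thesis by simp
  qed
  show "ae_approx_D_differentiable mu D C g"
    unfolding ae_approx_D_differentiable_def
  proof (intro allI impI)
    fix B assume B: "mu_measurable mu B \<and> B \<subseteq> approx_lip_points mu C g"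
    have sub: "B \<subseteq> lip_points UNIV f"
    proof
      fix x assume "x \<in> B"
      then have x: "x \<in> C" "mu_accumulation mu x C" using B unfolding approx_lip_points_def by auto
      have lim: "x islimpt UNIV" using islimpt_subset[OF acc_islimpt[OF x(2)]] by simp
      have "Limsup (at x within UNIV) (\<lambda>y. ereal (dist (f y) (f x) / dist y x)) \<le> ereal (3 * L)"
      proof (rule Limsup_bounded, rule always_eventually, rule allI)
        fix y
        show "ereal (dist (f y) (f x) / dist y x) \<le> ereal (3 * L)"
        proof (cases "y = x")
          case True then show ?thesis using L0 by simp
        next
          case False
          then have "dist y x > 0" by simp
          then show ?thesis using fbound[OF x(1), of y] by (simp add: divide_le_eq)
        qed
      qed
      then have "Limsup (at x within UNIV) (\<lambda>y. ereal (dist (f y) (f x) / dist y x)) < \<infinity>"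
        using le_less_trans by fastforce
      then show "x \<in> lip_points UNIV f" unfolding lip_points_def using lim by simp
    qed
    have null: "mu {x \<in> B. \<not> D_differentiable_at D UNIV f x} = 0"
      using hyp B sub unfolding ae_D_differentiable_def by blast
    have "{x \<in> B. \<not> approx_D_differentiable_at mu D C g x} \<subseteq> {x \<in> B. \<not> D_differentiable_at D UNIV f x}"
    proof (safe)
      fix x assume xB: "x \<in> B" and nap: "\<not> approx_D_differentiable_at mu D C g x"
        and dif: "D_differentiable_at D UNIV f x"
      have x: "x \<in> C" "mu_accumulation mu x C" using B xB unfolding approx_lip_points_def by auto
      obtain c B' F where cD: "(x, f x, c) \<in> D" and BF: "(B', F) \<in> c"
        and lim: "((\<lambda>y. dist (f y) (F y) / dist y x) \<longlongrightarrow> 0) (at x within UNIV)"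
        using dif unfolding D_differentiable_at_def by blast
      have fx: "f x = g x" using x by (simp add: f_def)
      have "mu_tendsto mu x C (\<lambda>y. dist (g y) (F y) / dist y x) 0"
        unfolding mu_tendsto_def
      proof (intro allI impI)
        fix e :: real assume e: "e > 0"
        have "\<forall>\<^sub>F y in at x within UNIV. dist (dist (f y) (F y) / dist y x) 0 < e"
          using lim e unfolding tendsto_iff by blast
        then obtain d where d: "d > 0" "\<And>y. y \<noteq> x \<Longrightarrow> dist y x < d \<Longrightarrow> dist (dist (f y) (F y) / dist y x) 0 < e"
          unfolding eventually_at by blast
        show "\<exists>U. mu_nbhd mu x U \<and> (\<forall>y\<in>U \<inter> C - {x}. dist (dist (g y) (F y) / dist y x) 0 < e)"
        proof (intro exI[of _ "ball x d"] conjI ballI)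
          show "mu_nbhd mu x (ball x d)" by (rule ball_nbhd[OF d(1)])
          fix y assume y: "y \<in> ball x d \<inter> C - {x}"
          then have "y \<noteq> x" "dist y x < d" "f y = g y" by (auto simp: dist_commute f_def)
          then show "dist (dist (g y) (F y) / dist y x) 0 < e" using d(2) by metis
        qed
      qed
      then have "approx_D_differentiable_at mu D C g x"
        unfolding approx_D_differentiable_at_def using x cD BF fx by auto
      then show False using nap by blast
    qed
    then show "mu {x \<in> B. \<not> approx_D_differentiable_at mu D C g x} = 0"
      by (rule null_subset[OF null])
  qed
qed

end


context dm begin

lemma upgrade:
  fixes D :: "('a \<times> 'b::metric_space \<times> ('a set \<times> ('a \<Rightarrow> 'b)) set) set" and f g :: "'a \<Rightarrow> 'b"
  assumes XD: "X_distribution D" and PA: "P \<subseteq> A" and PC: "P \<subseteq> C" and L0: "L \<ge> 0" and d0: "d0 > 0"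
    and loc: "\<And>z y. z \<in> P \<Longrightarrow> y \<in> A \<Longrightarrow> dist y z < d0 \<Longrightarrow> dist (f y) (f z) \<le> L * dist y z"
    and gf: "\<And>z. z \<in> P \<Longrightarrow> g z = f z"
    and hullH: "\<And>S. S \<in> sets borel \<Longrightarrow> P \<inter> S = {} \<Longrightarrow> mu (H \<inter> S) = 0"
    and xP: "x \<in> P" and xl: "x islimpt A"
    and ad: "approx_D_differentiable_at mu D C g x"
    and dH: "mu_nbhd mu x H"
  shows "D_differentiable_at D A f x"
proof -
  obtain c B' F where cD: "(x, g x, c) \<in> D" and BF: "(B', F) \<in> c"
    and mt: "mu_tendsto mu x C (\<lambda>y. dist (g y) (F y) / dist y x) 0"
    using ad unfolding approx_D_differentiable_at_def by blast
  have "c \<in> germ_classes x (g x)" using XD cD unfolding X_distribution_def by blast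
  then obtain r where "c = {s. lip_rep x (g x) s \<and> germ_eq x r s}"
    unfolding germ_classes_def by blast
  then have "lip_rep x (g x) (B', F)" using BF by blast
  then obtain Op LF where Op: "open Op" "x \<in> Op" "Op \<subseteq> B'" and LF: "LF-lipschitz_on B' F"
    unfolding lip_rep_def by blast
  have LF0: "LF \<ge> 0" by (rule lipschitz_on_nonneg[OF LF])
  obtain dO where dO: "dO > 0" "ball x dO \<subseteq> Op" using Op(1,2) open_contains_ball by blast
  have gx: "g x = f x" by (rule gf[OF xP])
  have xA: "x \<in> A" using xP PA by blast
  obtain BH where BH: "BH \<in> sets borel" "BH \<subseteq> H"
    "((\<lambda>r. enn2real (mu (ball x r - BH)) / enn2real (mu (ball x r))) \<longlongrightarrow> 0) (at_right 0)"
    using dH unfolding mu_nbhd_def by blast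
  have lim: "((\<lambda>y. dist (f y) (F y) / dist y x) \<longlongrightarrow> 0) (at x within A)"
    unfolding tendsto_iff
  proof (intro allI impI)
    fix \<epsilon> :: real assume \<epsilon>: "\<epsilon> > 0"
    define e where "e = \<epsilon> / 4"
    have e: "e > 0" using \<epsilon> by (simp add: e_def)
    obtain U where U: "mu_nbhd mu x U" "\<And>y. y \<in> U \<inter> C - {x} \<Longrightarrow> dist (dist (g y) (F y) / dist y x) 0 < e"
      using mt e unfolding mu_tendsto_def by blast
    obtain BU where BU: "BU \<in> sets borel" "BU \<subseteq> U"
      "((\<lambda>r. enn2real (mu (ball x r - BU)) / enn2real (mu (ball x r))) \<longlongrightarrow> 0) (at_right 0)"
      using U(1) unfolding mu_nbhd_def by blast
    obtain m :: nat where m: "8 + 16 * (L + LF + 1) / \<epsilon> < 2^m"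
      using real_arch_pow[of 2] by auto
    define \<eta> :: real where "\<eta> = 4 / 2^m"
    have \<eta>0: "\<eta> > 0" by (simp add: \<eta>_def)
    have pm: "(2::real)^m > 0" by simp
    have \<eta>half: "\<eta> < 1/2"
    proof -
      have "8 < (2::real)^m" using m \<epsilon> L0 LF0 by (smt (verit) divide_nonneg_pos)
      then show ?thesis unfolding \<eta>_def using pm by (simp add: divide_less_eq)
    qed
    have \<eta>L: "(L + LF) * \<eta> < \<epsilon> / 4"
    proof -
      have "16 * (L + LF + 1) / \<epsilon> < 2^m" using m by (smt (verit))
      then have "16 * (L + LF + 1) < 2^m * \<epsilon>" using \<epsilon> by (simp add: divide_less_eq)
      then have "(L + LF + 1) * \<eta> < \<epsilon> / 4" unfolding \<eta>_def using pm by (simp add: field_simps)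
      moreover have "(L + LF) * \<eta> \<le> (L + LF + 1) * \<eta>" using \<eta>0 by (simp add: mult_right_mono)
      ultimately show ?thesis by linarith
    qed
    have m\<eta>: "2^m * \<eta> = 4" unfolding \<eta>_def using pm by simp
    define \<kappa> where "\<kappa> = 1 / (4 * K^m)"
    have \<kappa>: "\<kappa> > 0" using Kpos by (simp add: \<kappa>_def)
    obtain r1 where r1: "r1 > 0" "\<And>r. 0 < r \<and> r < r1 \<Longrightarrow> mu (ball x r - BU) < ennreal \<kappa> * mu (ball x r)"
      using nbhd_small[OF BU(3) \<kappa>] by blast
    obtain r2 where r2: "r2 > 0" "\<And>r. 0 < r \<and> r < r2 \<Longrightarrow> mu (ball x r - BH) < ennreal \<kappa> * mu (ball x r)"
      using nbhd_small[OF BH(3) \<kappa>] by blast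
    define d where "d = min (min (r1/2) (r2/2)) (min d0 (dO/2))"
    have d: "d > 0" using r1 r2 d0 dO by (simp add: d_def)
    show "\<forall>\<^sub>F y in at x within A. dist (dist (f y) (F y) / dist y x) 0 < \<epsilon>"
      unfolding eventually_at
    proof (intro exI[of _ d] conjI ballI impI)
      show "d > 0" by (rule d)
      fix y assume yA: "y \<in> A" and yx: "y \<noteq> x \<and> dist y x < d"
      define t where "t = dist y x"
      have t: "t > 0" "2 * t < r1" "2 * t < r2" "t < d0" "2 * t < dO"
        using yx by (auto simp: t_def d_def)
      have \<eta>t: "\<eta> * t > 0" using \<eta>0 t(1) by simp
      have "\<exists>z. z \<in> P \<inter> (BU \<inter> ball y (\<eta> * t))"
      proof (rule ccontr)
        assume "\<not> (\<exists>z. z \<in> P \<inter> (BU \<inter> ball y (\<eta> * t)))"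
        then have emp: "P \<inter> (BU \<inter> ball y (\<eta> * t)) = {}" by blast
        have Sb: "BU \<inter> ball y (\<eta> * t) \<in> sets borel" using BU(1) by simp
        have z0: "mu (H \<inter> (BU \<inter> ball y (\<eta> * t))) = 0" by (rule hullH[OF Sb emp])
        have z1: "mu (BH \<inter> (BU \<inter> ball y (\<eta> * t))) = 0"
          by (rule null_subset[OF z0]) (use BH(2) in blast)
        have sub1: "ball y (\<eta> * t) \<subseteq> ((ball x (2*t) - BH) \<union> (ball x (2*t) - BU)) \<union> (BH \<inter> (BU \<inter> ball y (\<eta> * t)))"
        proof
          fix w assume w: "w \<in> ball y (\<eta> * t)"
          have f1: "dist x w \<le> dist x y + dist y w" by (rule dist_triangle)
          have f2: "dist y w < \<eta> * t" using w by simp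
          have f3: "dist x y = t" by (simp add: t_def dist_commute)
          have "\<eta> * t < t" using \<eta>half t(1) by simp
          then have "dist x w < 2*t" using f1 f2 f3 by linarith
          then have "w \<in> ball x (2*t)" by simp
          then show "w \<in> ((ball x (2*t) - BH) \<union> (ball x (2*t) - BU)) \<union> (BH \<inter> (BU \<inter> ball y (\<eta> * t)))"
            using w by blast
        qed
        define M where "M = mu (ball x (2*t))"
        have "mu (ball y (\<eta> * t)) \<le> mu (((ball x (2*t) - BH) \<union> (ball x (2*t) - BU)) \<union> (BH \<inter> (BU \<inter> ball y (\<eta> * t))))"
          by (rule mono[OF sub1])
        also have "\<dots> \<le> mu ((ball x (2*t) - BH) \<union> (ball x (2*t) - BU)) + mu (BH \<inter> (BU \<inter> ball y (\<eta> * t)))"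
          by (rule sub2)
        also have "\<dots> = mu ((ball x (2*t) - BH) \<union> (ball x (2*t) - BU))" using z1 by simp
        also have "\<dots> \<le> mu (ball x (2*t) - BH) + mu (ball x (2*t) - BU)" by (rule sub2)
        also have "\<dots> \<le> ennreal \<kappa> * M + ennreal \<kappa> * M"
        proof (rule add_mono)
          have "0 < 2*t \<and> 2*t < r2" using t by simp
          then show "mu (ball x (2*t) - BH) \<le> ennreal \<kappa> * M" unfolding M_def using r2(2) less_imp_le by blast
          have "0 < 2*t \<and> 2*t < r1" using t by simp
          then show "mu (ball x (2*t) - BU) \<le> ennreal \<kappa> * M" unfolding M_def using r1(2) less_imp_le by blast
        qed
        also have "\<dots> = ennreal (2 * \<kappa>) * M"
        proof -
          have e1: "ennreal (\<kappa> + \<kappa>) = ennreal \<kappa> + ennreal \<kappa>" using \<kappa> by (intro ennreal_plus) auto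
          have e2: "\<kappa> + \<kappa> = 2 * \<kappa>" by simp
          have "ennreal (2 * \<kappa>) = ennreal \<kappa> + ennreal \<kappa>" using e1 unfolding e2 .
          then show ?thesis by (simp add: distrib_right)
        qed
        finally have a: "mu (ball y (\<eta> * t)) \<le> ennreal (2 * \<kappa>) * M" .
        have "ball x (2*t) \<subseteq> ball y (2^m * (\<eta> * t))"
        proof
          fix w assume w: "w \<in> ball x (2*t)"
          have f1: "dist y w \<le> dist y x + dist x w" by (rule dist_triangle)
          have f2: "dist x w < 2*t" using w by simp
          have f3: "dist y x = t" by (simp add: t_def)
          have "2^m * (\<eta> * t) = (2^m * \<eta>) * t" by (simp only: mult.assoc)
          then have f4: "2^m * (\<eta> * t) = 4 * t" using m\<eta> by simp
          have "dist y w < 4*t" using f1 f2 f3 t(1) by linarith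
          then have "dist y w < 2^m * (\<eta> * t)" using f4 by linarith
          then show "w \<in> ball y (2^m * (\<eta> * t))" by simp
        qed
        then have "M \<le> mu (ball y (2^m * (\<eta> * t)))" unfolding M_def by (rule mono)
        also have "\<dots> \<le> ennreal (K^m) * mu (ball y (\<eta> * t))"
          by (rule dbl_iter[OF \<eta>t])
        finally have "M \<le> ennreal (K^m) * mu (ball y (\<eta> * t))" .
        then have "ennreal (2 * \<kappa>) * M \<le> ennreal (2 * \<kappa>) * (ennreal (K^m) * mu (ball y (\<eta> * t)))"
          by (rule mult_left_mono) simp
        also have "\<dots> = ennreal (1/2) * mu (ball y (\<eta> * t))"
        proof -
          have "ennreal (2 * \<kappa>) * ennreal (K^m) = ennreal (2 * \<kappa> * K^m)"
            using \<kappa> Kpos by (simp add: ennreal_mult)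
          also have "2 * \<kappa> * K^m = 1/2" using Kpos by (simp add: \<kappa>_def)
          finally show ?thesis by (simp add: mult.assoc[symmetric])
        qed
        finally have "mu (ball y (\<eta> * t)) \<le> ennreal (1/2) * mu (ball y (\<eta> * t))" using a by (rule order_trans[rotated])
        then have "mu (ball y (\<eta> * t)) = 0" by (rule half_contra[OF _ ball_fin])
        moreover have "mu (ball y (\<eta> * t)) > 0" by (rule ball_pos[OF \<eta>t])
        ultimately show False by simp
      qed
      then obtain z where z: "z \<in> P" "z \<in> BU" "dist y z < \<eta> * t" by auto
      have \<eta>t_lt: "\<eta> * t < t / 2" using \<eta>half t(1) by simp
      have zx1: "dist z x \<le> dist z y + dist y x" by (rule dist_triangle)
      have zx2: "dist y x \<le> dist y z + dist z x" by (rule dist_triangle)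
      have s1: "dist z y = dist y z" by (rule dist_commute)
      have ty: "dist y x = t" by (simp add: t_def)
      have dzx: "dist z x < t + \<eta> * t" "dist z x > 0"
        using zx1 zx2 z(3) \<eta>t_lt t(1) s1 ty by linarith+
      have zC: "z \<in> U \<inter> C - {x}" using z BU(2) PC dzx(2) by auto
      have rg: "dist (dist (g z) (F z) / dist z x) 0 < e" by (rule U(2)[OF zC])
      then have "dist (g z) (F z) / dist z x < e" by simp
      then have "dist (g z) (F z) < e * dist z x" using dzx(2) by (simp add: divide_less_eq)
      also have "\<dots> \<le> e * (t + \<eta> * t)" using e dzx(1) by simp
      finally have b1: "dist (f z) (F z) < e * (t + \<eta> * t)" using gf[OF z(1)] by simp
      have "dist y z < d0" using z(3) \<eta>t_lt t(4) t(1) by linarith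
      then have "dist (f y) (f z) \<le> L * dist y z" by (rule loc[OF z(1) yA])
      also have "\<dots> \<le> L * (\<eta> * t)" using z(3) L0 by (simp add: mult_left_mono)
      finally have b2: "dist (f y) (f z) \<le> L * (\<eta> * t)" .
      have "dist z x < dO" using dzx(1) \<eta>t_lt t(5) t(1) by linarith
      then have "z \<in> ball x dO" by (simp add: dist_commute)
      then have zB: "z \<in> B'" using dO(2) Op(3) by blast
      have "dist y x < dO" using t(1,5) ty by linarith
      then have "y \<in> ball x dO" by (simp add: dist_commute)
      then have yB: "y \<in> B'" using dO(2) Op(3) by blast
      have "dist (F z) (F y) \<le> LF * dist z y" by (rule lipschitz_onD[OF LF zB yB])
      also have "\<dots> \<le> LF * (\<eta> * t)" using z(3) LF0 by (simp add: dist_commute mult_left_mono)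
      finally have b3: "dist (F z) (F y) \<le> LF * (\<eta> * t)" .
      have tri: "dist (f y) (F y) \<le> dist (f y) (f z) + dist (f z) (F z) + dist (F z) (F y)"
        by (meson add_mono dist_triangle order_trans order_refl)
      have "dist (f y) (F y) < L * (\<eta> * t) + e * (t + \<eta> * t) + LF * (\<eta> * t)"
        using tri b1 b2 b3 by linarith
      also have "\<dots> = ((L + LF) * \<eta> + e * (1 + \<eta>)) * t" by (simp add: algebra_simps)
      also have "\<dots> \<le> \<epsilon> * t"
      proof (rule mult_right_mono)
        have "e * (1 + \<eta>) \<le> e * (3/2)" using e \<eta>half by simp
        moreover have "e * (3/2) = 3 * \<epsilon> / 8" by (simp add: e_def)
        ultimately show "(L + LF) * \<eta> + e * (1 + \<eta>) \<le> \<epsilon>" using \<eta>L \<epsilon> by linarith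
      qed (use t(1) in simp)
      finally have "dist (f y) (F y) / t < \<epsilon>" using t(1) by (simp add: divide_less_eq)
      then show "dist (dist (f y) (F y) / dist y x) 0 < \<epsilon>" by (simp add: t_def)
    qed
  qed
  show ?thesis
    unfolding D_differentiable_at_def
    using xA xl cD BF lim gx by auto
qed

end


context dm begin

lemma core:
  fixes D :: "('a \<times> 'b::complete_space \<times> ('a set \<times> ('a \<Rightarrow> 'b)) set) set" and f :: "'a \<Rightarrow> 'b"
  assumes DC: "differentiably_complete mu D" and XD: "X_distribution D"
    and PA: "P \<subseteq> A" and L0: "L \<ge> 0" and d0: "d0 > 0"
    and diam: "\<And>x y. x \<in> P \<Longrightarrow> y \<in> P \<Longrightarrow> dist x y < d0"
    and loc: "\<And>z y. z \<in> P \<Longrightarrow> y \<in> A \<Longrightarrow> dist y z < d0 \<Longrightarrow> dist (f y) (f z) \<le> L * dist y z"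
  shows "mu {x \<in> P. x islimpt A \<and> \<not> D_differentiable_at D A f x} = 0"
proof (cases "P = {}")
  case True then show ?thesis by simp
next
  case False
  then obtain p where p: "p \<in> P" by blast
  have Pball: "P \<subseteq> ball p d0" using diam p by (auto simp: dist_commute)
  have lipP: "L-lipschitz_on P f"
  proof (rule lipschitz_onI)
    fix x y assume x: "x \<in> P" and y: "y \<in> P"
    have "dist x y < d0" by (rule diam[OF x y])
    then show "dist (f x) (f y) \<le> L * dist x y" using loc[OF y _ ] x PA by blast
  qed (rule L0)
  obtain g where g: "L-lipschitz_on (closure P) g" "\<forall>x\<in>P. g x = f x"
    using lipschitz_extend_closure[OF lipP] by blast
  define C where "C = closure P"
  have Cc: "closed C" "C \<noteq> {}" "P \<subseteq> C" using False by (auto simp: C_def closure_subset)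
  have gL: "L-lipschitz_on C g" using g(1) by (simp add: C_def)
  have ae: "ae_approx_D_differentiable mu D C g"
    using DC Cc gL unfolding differentiably_complete_def by blast
  obtain H0 where H0: "H0 \<in> sets borel" "P \<subseteq> H0" "mu H0 = mu P" using hull by blast
  define H where "H = H0 \<inter> C"
  have Hb: "H \<in> sets borel" using H0(1) Cc(1) by (simp add: H_def borel_closed)
  have PH: "P \<subseteq> H" using H0(2) Cc(3) by (auto simp: H_def)
  have muP: "mu P < \<infinity>" using mono[OF Pball] ball_fin[of p d0] by (rule le_less_trans)
  have muH: "mu H = mu P"
  proof (rule antisym)
    show "mu H \<le> mu P" using mono[of H H0] H0(3) by (simp add: H_def)
    show "mu P \<le> mu H" by (rule mono[OF PH])
  qed
  have hullH: "mu (H \<inter> S) = 0" if S: "S \<in> sets borel" and emp: "P \<inter> S = {}" for S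
  proof -
    have "P \<subseteq> H - S" using PH emp by blast
    then have "mu P \<le> mu (H - S)" by (rule mono)
    then have "mu (H \<inter> S) + mu P \<le> mu (H \<inter> S) + mu (H - S)" by (rule add_left_mono)
    also have "\<dots> = mu H" using meas[OF S, of H] by simp
    also have "\<dots> = mu P" by (rule muH)
    finally have "mu P + mu (H \<inter> S) \<le> mu P + 0" by (simp add: add.commute)
    then have "mu (H \<inter> S) \<le> 0" using muP by (subst (asm) ennreal_add_left_cancel_le) auto
    then show ?thesis by simp
  qed
  define N1 where "N1 = {x \<in> C. \<not> mu_nbhd mu x C}"
  have N1: "mu N1 = 0" unfolding N1_def by (rule density_borel) (use Cc(1) in simp)
  define Lp where "Lp = {x. x islimpt (UNIV :: 'a set)}"
  have Lpc: "closed Lp" unfolding Lp_def by (rule closed_limpts)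
  define Bm where "Bm = (C \<inter> Lp) - N1"
  have Bmm: "mu_measurable mu Bm"
    unfolding Bm_def
    by (rule measurable_diff_null[OF borel_measurable_mu N1]) (use Cc(1) Lpc in simp)
  have Bmsub: "Bm \<subseteq> approx_lip_points mu C g"
  proof
    fix x assume x: "x \<in> Bm"
    then have xC: "x \<in> C" and xl: "x islimpt UNIV" and xn: "mu_nbhd mu x C"
      by (auto simp: Bm_def Lp_def N1_def)
    have acc: "mu_accumulation mu x C" by (rule acc_of_density[OF xn xl])
    have "mu_limsup mu x C (\<lambda>y. dist (g y) (g x) / dist y x) \<le> ereal L"
      unfolding mu_limsup_def
    proof (rule INF_lower2)
      show "UNIV \<in> {U. mu_nbhd mu x U}" using univ_nbhd by simp
      show "(SUP y\<in>UNIV \<inter> C - {x}. ereal (dist (g y) (g x) / dist y x)) \<le> ereal L"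
      proof (rule SUP_least)
        fix y assume y: "y \<in> UNIV \<inter> C - {x}"
        then have "dist y x > 0" by simp
        moreover have "dist (g y) (g x) \<le> L * dist y x" using lipschitz_onD[OF gL, of y x] y xC by simp
        ultimately show "ereal (dist (g y) (g x) / dist y x) \<le> ereal L" by (simp add: divide_le_eq)
      qed
    qed
    then have "mu_limsup mu x C (\<lambda>y. dist (g y) (g x) / dist y x) < \<infinity>"
      using le_less_trans by fastforce
    then show "x \<in> approx_lip_points mu C g" unfolding approx_lip_points_def using xC acc by simp
  qed
  define N2 where "N2 = {x \<in> Bm. \<not> approx_D_differentiable_at mu D C g x}"
  have N2: "mu N2 = 0" using ae Bmm Bmsub unfolding ae_approx_D_differentiable_def N2_def by blast
  define N3 where "N3 = {x \<in> H. \<not> mu_nbhd mu x H}"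
  have N3: "mu N3 = 0" unfolding N3_def by (rule density_borel[OF Hb])
  have "{x \<in> P. x islimpt A \<and> \<not> D_differentiable_at D A f x} \<subseteq> (N1 \<union> N2) \<union> N3"
  proof
    fix x assume x: "x \<in> {x \<in> P. x islimpt A \<and> \<not> D_differentiable_at D A f x}"
    show "x \<in> (N1 \<union> N2) \<union> N3"
    proof (rule ccontr)
      assume nN: "x \<notin> (N1 \<union> N2) \<union> N3"
      have xP: "x \<in> P" and xl: "x islimpt A" and nd: "\<not> D_differentiable_at D A f x" using x by auto
      have xC: "x \<in> C" using xP Cc(3) by blast
      have xLp: "x \<in> Lp" using islimpt_subset[OF xl] by (simp add: Lp_def)
      have xBm: "x \<in> Bm" using xC xLp nN by (simp add: Bm_def)
      have ad: "approx_D_differentiable_at mu D C g x" using xBm nN by (simp add: N2_def)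
      have dH: "mu_nbhd mu x H" using xP PH nN by (auto simp: N3_def)
      have "D_differentiable_at D A f x"
        by (rule upgrade[OF XD PA Cc(3) L0 d0 loc _ hullH xP xl ad dH]) (use g(2) in auto)
      then show False using nd by blast
    qed
  qed
  moreover have "mu ((N1 \<union> N2) \<union> N3) = 0"
  proof -
    have "mu ((N1 \<union> N2) \<union> N3) \<le> mu (N1 \<union> N2) + mu N3" by (rule sub2)
    also have "\<dots> \<le> (mu N1 + mu N2) + mu N3" by (rule add_right_mono[OF sub2])
    finally show ?thesis using N1 N2 N3 by simp
  qed
  ultimately show ?thesis by (rule null_subset[rotated])
qed

end


context dm begin

lemma dir1:
  fixes D :: "('a \<times> 'b::complete_space \<times> ('a set \<times> ('a \<Rightarrow> 'b)) set) set" and f :: "'a \<Rightarrow> 'b"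
  assumes DC: "differentiably_complete mu D" and XD: "X_distribution D"
  shows "ae_D_differentiable mu D A f"
  unfolding ae_D_differentiable_def
proof (intro allI impI)
  fix Bm assume Bm: "mu_measurable mu Bm \<and> Bm \<subseteq> lip_points A f"
  define E where "E n = {x \<in> A. \<forall>y\<in>A. dist y x < 1 / real (Suc n) \<longrightarrow> dist (f y) (f x) \<le> real (Suc n) * dist y x}" for n
  obtain Q :: "'a set" where Q: "countable Q" "\<And>X. open X \<Longrightarrow> X \<noteq> {} \<Longrightarrow> \<exists>d\<in>Q. d \<in> X"
    using countable_dense_setE by blast
  define q where "q k = from_nat_into Q k" for k
  define P where "P n k = E n \<inter> ball (q k) (1 / (2 * real (Suc n)))" for n k
  have Pnull: "mu {x \<in> P n k. x islimpt A \<and> \<not> D_differentiable_at D A f x} = 0" for n k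
  proof (rule core[OF DC XD])
    show "P n k \<subseteq> A" by (auto simp: P_def E_def)
    show "real (Suc n) \<ge> 0" by simp
    show "1 / real (Suc n) > 0" by simp
    fix x y assume x: "x \<in> P n k" and y: "y \<in> P n k"
    have "dist x y \<le> dist x (q k) + dist (q k) y" by (rule dist_triangle)
    moreover have "dist x (q k) < 1 / (2 * real (Suc n))" "dist (q k) y < 1 / (2 * real (Suc n))"
      using x y by (auto simp: P_def dist_commute)
    ultimately have "dist x y < 1 / (2 * real (Suc n)) + 1 / (2 * real (Suc n))" by linarith
    also have "1 / (2 * real (Suc n)) + 1 / (2 * real (Suc n)) = 1 / real (Suc n)" by (simp add: field_simps)
    finally show "dist x y < 1 / real (Suc n)" .
  next
    fix z y assume z: "z \<in> P n k" and y: "y \<in> A" and d: "dist y z < 1 / real (Suc n)"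
    then show "dist (f y) (f z) \<le> real (Suc n) * dist y z" by (auto simp: P_def E_def)
  qed
  have cover: "{x \<in> Bm. \<not> D_differentiable_at D A f x} \<subseteq>
      (\<Union>n. \<Union>k. {x \<in> P n k. x islimpt A \<and> \<not> D_differentiable_at D A f x})"
  proof
    fix x assume x: "x \<in> {x \<in> Bm. \<not> D_differentiable_at D A f x}"
    then have xA: "x \<in> A" and xl: "x islimpt A" and nd: "\<not> D_differentiable_at D A f x"
      and ls: "Limsup (at x within A) (\<lambda>y. ereal (dist (f y) (f x) / dist y x)) < \<infinity>"
      using Bm unfolding lip_points_def by auto
    obtain n0 :: nat where n0: "Limsup (at x within A) (\<lambda>y. ereal (dist (f y) (f x) / dist y x)) < ereal (real n0)"
      using ls less_PInf_Ex_of_nat by (metis less_ereal.simps(2) less_irrefl)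
    have "\<forall>\<^sub>F y in at x within A. ereal (dist (f y) (f x) / dist y x) < ereal (real n0)"
      by (rule Limsup_lessD[OF n0])
    then obtain \<delta> where \<delta>: "\<delta> > 0" "\<And>y. y \<in> A \<Longrightarrow> y \<noteq> x \<Longrightarrow> dist y x < \<delta> \<Longrightarrow>
        dist (f y) (f x) / dist y x < real n0"
      unfolding eventually_at by auto
    obtain N :: nat where N: "inverse (real (Suc N)) < \<delta>" using reals_Archimedean[OF \<delta>(1)] by blast
    define n where "n = max n0 N"
    have n1: "1 / real (Suc n) < \<delta>"
    proof -
      have "1 / real (Suc n) \<le> 1 / real (Suc N)" by (simp add: n_def frac_le)
      then show ?thesis using N by (simp add: inverse_eq_divide)
    qed
    have n2: "real n0 \<le> real (Suc n)" by (simp add: n_def)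
    have xE: "x \<in> E n"
      unfolding E_def
    proof (safe intro!: xA)
      fix y assume y: "y \<in> A" "dist y x < 1 / real (Suc n)"
      show "dist (f y) (f x) \<le> real (Suc n) * dist y x"
      proof (cases "y = x")
        case True then show ?thesis by simp
      next
        case False
        then have dp: "dist y x > 0" by simp
        have "dist (f y) (f x) / dist y x < real n0" using \<delta>(2)[OF y(1) False] y(2) n1 by linarith
        then have "dist (f y) (f x) < real n0 * dist y x" using dp by (simp add: divide_less_eq)
        also have "\<dots> \<le> real (Suc n) * dist y x" using n2 dp by (simp add: mult_right_mono)
        finally show ?thesis by simp
      qed
    qed
    have "open (ball x (1 / (2 * real (Suc n))))" "ball x (1 / (2 * real (Suc n))) \<noteq> {}" by auto
    then obtain dq where dq: "dq \<in> Q" "dq \<in> ball x (1 / (2 * real (Suc n)))" using Q(2) by blast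
    define k where "k = to_nat_on Q dq"
    have "q k = dq" using Q(1) dq(1) by (simp add: q_def k_def)
    then have "x \<in> ball (q k) (1 / (2 * real (Suc n)))" using dq(2) by (simp add: dist_commute)
    then have "x \<in> P n k" using xE by (simp add: P_def)
    then show "x \<in> (\<Union>n. \<Union>k. {x \<in> P n k. x islimpt A \<and> \<not> D_differentiable_at D A f x})"
      using xl nd by blast
  qed
  have "mu (\<Union>n. \<Union>k. {x \<in> P n k. x islimpt A \<and> \<not> D_differentiable_at D A f x}) = 0"
    by (rule null_union, rule null_union, rule Pnull)
  then show "mu {x \<in> Bm. \<not> D_differentiable_at D A f x} = 0"
    by (rule null_subset[OF _ cover])
qed

end

theorem theorem2p9:
  fixes K :: real
    and mu :: "'a::polish_space set \<Rightarrow> ennreal"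
    and D :: "('a \<times> 'b::complete_space \<times> ('a set \<times> ('a \<Rightarrow> 'b)) set) set"
  assumes "doubling_mms K mu"
    and "X_distribution D"
  shows "(differentiably_complete mu D \<longrightarrow>
            (\<forall>A (f :: 'a \<Rightarrow> 'b). A \<noteq> {} \<longrightarrow> ae_D_differentiable mu D A f))
       \<and> ((\<forall>f :: 'a \<Rightarrow> 'b. ae_D_differentiable mu D UNIV f) \<longrightarrow> differentiably_complete mu D)"
proof -
  interpret dm K mu by (rule dm.intro) (rule assms(1))
  show ?thesis
    using dir1[OF _ assms(2)] dir2 by blast
qed


end
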